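(* Let $\Omega\subset\mathbb R^n$, $n\ge2$, be a bounded domain with $\partial\Omega$ of class $C^{2,\alpha}$, and $\Sigma$ a closed smooth submanifold of $\Omega$ of codimension at least $2$. Let $(M,g)=\mathbb H^\ell_{\mathbb K}$ ($\ell\ge2$, $\mathbb K\in\{\mathbb R,\mathbb C,\mathbb H\}$), normalized to have sectional curvatures in $[-4,-1]$, and let $a>0$ be such that all sectional curvatures of $M$ are $\le -a^2$. Let $\gamma$ be a unit speed geodesic, $\phi=(u,v)$ the coordinate system with $u=f_{-\gamma}$ described in the context, in which $g=du^2+Q_p(dv)$. Let $\varphi_0$ be a $\Sigma$-singular map into $\gamma$ and write $\varphi_0=\gamma\circ u_0$ with $u_0\colon\Omega\setminus\Sigma\to\mathbb R$. Then for every $v\in H^{\varphi_0}_{1,0}(\Omega;\mathbb R^{m-1})$, $$\int_\Omega Q_{\varphi_0}(v)\,|\nabla u_0|^2\le a^{-2}\int_\Omega Q_{\varphi_0}(\nabla v).$$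
   Context: $m=\dim_{\mathbb R}M$. Busemann function: $f_\gamma(p)=\lim_{t\to\infty}(\operatorname{dist}(p,\gamma(t))-t)$, $-\gamma(t)=\gamma(-t)$. The coordinate system $\phi=(u,v)$ is the analytic one in which the metric reads, for $\mathbb K=\mathbb R$: $du^2+e^{2u}\sum_{k=1}^{\ell-1}dv_k^2$; for $\mathbb K=\mathbb C$: $du^2+e^{4u}\big(dv_1+\sum_{k=1}^{\ell-1}(v_{2k}dv_{2k+1}-v_{2k+1}dv_{2k})\big)^2+e^{2u}\sum_{k=2}^{2\ell-1}dv_k^2$; for $\mathbb K=\mathbb H$: $du^2+e^{4u}\mathfrak S\big(dv_1+\sum_{k=1}^{\ell-1}(v_{4k}dv_{4k+1}-v_{4k+1}dv_{4k}-v_{4k+2}dv_{4k+3}+v_{4k+3}dv_{4k+2})\big)^2+e^{2u}\sum_{k=4}^{4\ell-1}dv_k^2$ ($\mathfrak S$ = sum over cyclic permutations of the indices $\{1,2,3\}$); $Q_p$ is the resulting positive quadratic form on $\mathbb R^{m-1}$, with $Q_{\varphi_0}(\xi)$ meaning $Q_{\varphi_0(x)}(\xi)$ and $Q_{\varphi_0}(\nabla v)=\sum_{k=1}^nQ_{\varphi_0(x)}(\partial_kv(x))$. A $\Sigma$-singular map into $\gamma$ is a harmonic map $\varphi_0\in C^\infty(\Omega\setminus\Sigma;M)\cap C^{2,\alpha}(\overline\Omega\setminus\Sigma;M)$ with $\varphi_0(\Omega\setminus\Sigma)\subset\gamma(\mathbb R)$, $\varphi_0(x)\to\gamma(+\infty)$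 (the ideal point determined by $\gamma$) as $x\to\Sigma$, and $\|d\varphi_0(x)\|^2\ge\delta\operatorname{dist}(x,\Sigma)^{-2}$ near $\Sigma$ for some $\delta>0$. The space $H^{\varphi_0}_{1,0}(\Omega;\mathbb R^{m-1})$ is the closure of $C^\infty_0(\Omega\setminus\Sigma;\mathbb R^{m-1})$ with respect to the norm $\|v\|_{\varphi_0}=\big(\int_\Omega\{|v|^2+Q_{\varphi_0}(\nabla v)\}\big)^{1/2}$ within the space of $v\in L^2(\Omega\setminus\Sigma;\mathbb R^{m-1})$ for which this norm is finite. *)

theory Defs
  imports "HOL-Analysis.Analysis"
begin

definition pd :: "'n::finite \<Rightarrow> (real^'n \<Rightarrow> real) \<Rightarrow> real^'n \<Rightarrow> real" where
  "pd i f x = deriv (\<lambda>t. f (x + t *\<^sub>R axis i 1)) 0"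

fun Ck :: "nat \<Rightarrow> (real^'n::finite) set \<Rightarrow> (real^'n \<Rightarrow> real) \<Rightarrow> bool" where
  "Ck 0 S f = continuous_on S f"
| "Ck (Suc k) S f = ((\<forall>x\<in>S. \<forall>i. (\<lambda>t. f (x + t *\<^sub>R axis i 1)) differentiable (at 0))
        \<and> (\<forall>i. Ck k S (pd i f)) \<and> continuous_on S f)"

definition Cinf :: "(real^'n::finite) set \<Rightarrow> (real^'n \<Rightarrow> real) \<Rightarrow> bool" where
  "Cinf S f \<longleftrightarrow> (\<forall>k. Ck k S f)"

definition holder_on :: "real \<Rightarrow> (real^'n::finite) set \<Rightarrow> (real^'n \<Rightarrow> real) \<Rightarrow> bool" where
  "holder_on \<alpha> S f \<longleftrightarrow> (\<exists>C. \<forall>x\<in>S. \<forall>y\<in>S. \<bar>f x - f y\<bar> \<le> C * dist x y powr \<alpha>)"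

definition C2alpha :: "real \<Rightarrow> (real^'n::finite) set \<Rightarrow> (real^'n \<Rightarrow> real) \<Rightarrow> bool" where
  "C2alpha \<alpha> U f \<longleftrightarrow> Ck 2 U f \<and> (\<forall>i j. holder_on \<alpha> U (pd i (pd j f)))"

definition C2alpha_closure :: "real \<Rightarrow> (real^'n::finite) set \<Rightarrow> (real^'n) set \<Rightarrow> (real^'n \<Rightarrow> real) \<Rightarrow> bool" where
  "C2alpha_closure \<alpha> \<Omega> \<Sigma> f \<longleftrightarrow>
     Ck 2 (\<Omega> - \<Sigma>) f \<and>
     (\<forall>D\<in>{f} \<union> range (\<lambda>i. pd i f) \<union> range (\<lambda>(i,j). pd i (pd j f)).
        \<exists>F. continuous_on (closure \<Omega> - \<Sigma>) F \<and> (\<forall>x\<in>\<Omega> - \<Sigma>. F x = D x)) \<and>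
     (\<forall>K. compact K \<and> K \<subseteq> closure \<Omega> - \<Sigma> \<longrightarrow>
        (\<forall>i j. holder_on \<alpha> (K \<inter> (\<Omega> - \<Sigma>)) (pd i (pd j f))))"

definition C2alpha_boundary :: "real \<Rightarrow> (real^'n::finite) set \<Rightarrow> bool" where
  "C2alpha_boundary \<alpha> \<Omega> \<longleftrightarrow>
     (\<forall>p\<in>frontier \<Omega>. \<exists>U (\<psi>::real^'n \<Rightarrow> real^'n) k0.
        open U \<and> p \<in> U \<and> inj_on \<psi> U \<and> open (\<psi> ` U) \<and>
        (\<forall>k. C2alpha \<alpha> U (\<lambda>x. \<psi> x $ k)) \<and>
        (\<forall>k. C2alpha \<alpha> (\<psi> ` U) (\<lambda>y. inv_into U \<psi> y $ k)) \<and>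
        \<psi> ` (U \<inter> \<Omega>) = \<psi> ` U \<inter> {y. y $ k0 > 0} \<and>
        \<psi> ` (U \<inter> frontier \<Omega>) = \<psi> ` U \<inter> {y. y $ k0 = 0})"

definition closed_smooth_submanifold_codim2 :: "(real^'n::finite) set \<Rightarrow> (real^'n) set \<Rightarrow> bool" where
  "closed_smooth_submanifold_codim2 \<Sigma> \<Omega> \<longleftrightarrow>
     compact \<Sigma> \<and> \<Sigma> \<subseteq> \<Omega> \<and>
     (\<forall>p\<in>\<Sigma>. \<exists>U (\<psi>::real^'n \<Rightarrow> real^'n) J.
        open U \<and> p \<in> U \<and> inj_on \<psi> U \<and> open (\<psi> ` U) \<and>
        (\<forall>k. Cinf U (\<lambda>x. \<psi> x $ k)) \<and>
        (\<forall>k. Cinf (\<psi> ` U) (\<lambda>y. inv_into U \<psi> y $ k)) \<and>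
        card J \<ge> 2 \<and>
        \<psi> ` (U \<inter> \<Sigma>) = \<psi> ` U \<inter> {y. \<forall>k\<in>J. y $ k = 0})"

text \<open>Points and tangent vectors of M are functions nat => real; coordinate 0 is u,
  coordinate k (1 <= k <= m-1) is v_k; coordinates >= m are unused.\<close>

datatype field = RR | CC | HH

fun dimK :: "field \<Rightarrow> nat" where
  "dimK RR = 1" | "dimK CC = 2" | "dimK HH = 4"

definition mdim :: "field \<Rightarrow> nat \<Rightarrow> nat" where
  "mdim K l = l * dimK K"

definition cyc :: "nat \<Rightarrow> nat \<Rightarrow> nat" where
  "cyc r i = ((i - 1) + (r - 1)) mod 3 + 1"

definition thetaC :: "nat \<Rightarrow> (nat \<Rightarrow> real) \<Rightarrow> (nat \<Rightarrow> real) \<Rightarrow> real" where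
  "thetaC l p \<xi> = \<xi> 1 + (\<Sum>k=1..l-1. p (2*k) * \<xi> (2*k+1) - p (2*k+1) * \<xi> (2*k))"

definition thetaH :: "nat \<Rightarrow> nat \<Rightarrow> (nat \<Rightarrow> real) \<Rightarrow> (nat \<Rightarrow> real) \<Rightarrow> real" where
  "thetaH l r p \<xi> = \<xi> (cyc r 1) + (\<Sum>k=1..l-1.
       p (4*k) * \<xi> (4*k + cyc r 1) - p (4*k + cyc r 1) * \<xi> (4*k)
     - p (4*k + cyc r 2) * \<xi> (4*k + cyc r 3) + p (4*k + cyc r 3) * \<xi> (4*k + cyc r 2))"

fun gmet :: "field \<Rightarrow> nat \<Rightarrow> (nat \<Rightarrow> real) \<Rightarrow> (nat \<Rightarrow> real) \<Rightarrow> (nat \<Rightarrow> real) \<Rightarrow> real" where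
  "gmet RR l p \<xi> \<eta> = \<xi> 0 * \<eta> 0 + exp (2 * p 0) * (\<Sum>k=1..l-1. \<xi> k * \<eta> k)"
| "gmet CC l p \<xi> \<eta> = \<xi> 0 * \<eta> 0 + exp (4 * p 0) * (thetaC l p \<xi> * thetaC l p \<eta>)
      + exp (2 * p 0) * (\<Sum>k=2..2*l-1. \<xi> k * \<eta> k)"
| "gmet HH l p \<xi> \<eta> = \<xi> 0 * \<eta> 0 + exp (4 * p 0) * (\<Sum>r=1..3. thetaH l r p \<xi> * thetaH l r p \<eta>)
      + exp (2 * p 0) * (\<Sum>k=4..4*l-1. \<xi> k * \<eta> k)"

text \<open>Q_p: the positive quadratic form on R^{m-1} (vectors indexed by 1..m-1) with g = du^2 + Q_p(dv).\<close>
definition Qf :: "field \<Rightarrow> nat \<Rightarrow> (nat \<Rightarrow> real) \<Rightarrow> (nat \<Rightarrow> real) \<Rightarrow> real" where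
  "Qf K l p \<zeta> = gmet K l p (\<zeta>(0 := 0)) (\<zeta>(0 := 0))"

definition evec :: "nat \<Rightarrow> nat \<Rightarrow> real" where
  "evec i = (\<lambda>k. if k = i then 1 else 0)"

definition gcomp :: "field \<Rightarrow> nat \<Rightarrow> (nat \<Rightarrow> real) \<Rightarrow> nat \<Rightarrow> nat \<Rightarrow> real" where
  "gcomp K l p i j = gmet K l p (evec i) (evec j)"

definition ginv :: "field \<Rightarrow> nat \<Rightarrow> (nat \<Rightarrow> real) \<Rightarrow> nat \<Rightarrow> nat \<Rightarrow> real" where
  "ginv K l p = (THE h. (\<forall>i<mdim K l. \<forall>k<mdim K l.
        (\<Sum>j<mdim K l. gcomp K l p i j * h j k) = (if i = k then 1 else 0)) \<and>
      (\<forall>i j. \<not> (i < mdim K l \<and> j < mdim K l) \<longrightarrow> h i j = 0))"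

definition pdM :: "nat \<Rightarrow> ((nat \<Rightarrow> real) \<Rightarrow> real) \<Rightarrow> (nat \<Rightarrow> real) \<Rightarrow> real" where
  "pdM i F p = deriv (\<lambda>t. F (p(i := t))) (p i)"

definition Chr :: "field \<Rightarrow> nat \<Rightarrow> nat \<Rightarrow> nat \<Rightarrow> nat \<Rightarrow> (nat \<Rightarrow> real) \<Rightarrow> real" where
  "Chr K l k i j p = (1/2) * (\<Sum>s<mdim K l. ginv K l p k s *
      (pdM i (\<lambda>q. gcomp K l q j s) p + pdM j (\<lambda>q. gcomp K l q i s) p - pdM s (\<lambda>q. gcomp K l q i j) p))"

text \<open>Riemann tensor R^l_{ijk}, with R(d_i,d_j)d_k = R^l_{ijk} d_l and
  R(X,Y) = nabla_X nabla_Y - nabla_Y nabla_X - nabla_[X,Y]\<close>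
definition Riem :: "field \<Rightarrow> nat \<Rightarrow> nat \<Rightarrow> nat \<Rightarrow> nat \<Rightarrow> nat \<Rightarrow> (nat \<Rightarrow> real) \<Rightarrow> real" where
  "Riem K l a i j k p = pdM i (Chr K l a j k) p - pdM j (Chr K l a i k) p
     + (\<Sum>s<mdim K l. Chr K l s j k p * Chr K l a i s p - Chr K l s i k p * Chr K l a j s p)"

definition RXYZ :: "field \<Rightarrow> nat \<Rightarrow> (nat \<Rightarrow> real) \<Rightarrow> (nat \<Rightarrow> real) \<Rightarrow> (nat \<Rightarrow> real) \<Rightarrow> (nat \<Rightarrow> real) \<Rightarrow> nat \<Rightarrow> real" where
  "RXYZ K l p X Y Z = (\<lambda>a. \<Sum>i<mdim K l. \<Sum>j<mdim K l. \<Sum>k<mdim K l.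
       X i * Y j * Z k * Riem K l a i j k p)"

definition sec :: "field \<Rightarrow> nat \<Rightarrow> (nat \<Rightarrow> real) \<Rightarrow> (nat \<Rightarrow> real) \<Rightarrow> (nat \<Rightarrow> real) \<Rightarrow> real" where
  "sec K l p X Y = gmet K l p (RXYZ K l p X Y Y) X /
      (gmet K l p X X * gmet K l p Y Y - (gmet K l p X Y)^2)"

definition in_coords :: "field \<Rightarrow> nat \<Rightarrow> (nat \<Rightarrow> real) \<Rightarrow> bool" where
  "in_coords K l p \<longleftrightarrow> (\<forall>k. k \<ge> mdim K l \<longrightarrow> p k = 0)"

definition in_Rm1 :: "field \<Rightarrow> nat \<Rightarrow> (nat \<Rightarrow> real) \<Rightarrow> bool" where
  "in_Rm1 K l \<zeta> \<longleftrightarrow> (\<forall>k. (k = 0 \<or> k \<ge> mdim K l) \<longrightarrow> \<zeta> k = 0)"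

text \<open>the geodesic gamma: the u-line through v = c; u = f_{-gamma}, gamma(t) has u = t\<close>
definition gam :: "(nat \<Rightarrow> real) \<Rightarrow> real \<Rightarrow> nat \<Rightarrow> real" where
  "gam c t = (\<lambda>k. if k = 0 then t else c k)"

definition dmap :: "'n::finite \<Rightarrow> (real^'n \<Rightarrow> nat \<Rightarrow> real) \<Rightarrow> real^'n \<Rightarrow> nat \<Rightarrow> real" where
  "dmap i \<phi> x = (\<lambda>k. pd i (\<lambda>y. \<phi> y k) x)"

definition harmonic_map :: "field \<Rightarrow> nat \<Rightarrow> (real^'n::finite) set \<Rightarrow> (real^'n \<Rightarrow> nat \<Rightarrow> real) \<Rightarrow> bool" where
  "harmonic_map K l S \<phi> \<longleftrightarrow>
     (\<forall>x\<in>S. in_coords K l (\<phi> x)) \<and>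
     (\<forall>k<mdim K l. Cinf S (\<lambda>y. \<phi> y k)) \<and>
     (\<forall>x\<in>S. \<forall>k<mdim K l.
        (\<Sum>\<alpha>\<in>UNIV. pd \<alpha> (pd \<alpha> (\<lambda>y. \<phi> y k)) x
           + (\<Sum>i<mdim K l. \<Sum>j<mdim K l. Chr K l k i j (\<phi> x) * dmap \<alpha> \<phi> x i * dmap \<alpha> \<phi> x j)) = 0)"

definition edens :: "field \<Rightarrow> nat \<Rightarrow> (real^'n::finite \<Rightarrow> nat \<Rightarrow> real) \<Rightarrow> real^'n \<Rightarrow> real" where
  "edens K l \<phi> x = (\<Sum>\<alpha>\<in>UNIV. gmet K l (\<phi> x) (dmap \<alpha> \<phi> x) (dmap \<alpha> \<phi> x))"

definition sqn :: "field \<Rightarrow> nat \<Rightarrow> (nat \<Rightarrow> real) \<Rightarrow> real" where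
  "sqn K l \<zeta> = (\<Sum>k=1..mdim K l - 1. (\<zeta> k)^2)"

definition Qgrad :: "field \<Rightarrow> nat \<Rightarrow> (real^'n::finite \<Rightarrow> nat \<Rightarrow> real) \<Rightarrow> (real^'n \<Rightarrow> 'n \<Rightarrow> nat \<Rightarrow> real) \<Rightarrow> real^'n \<Rightarrow> real" where
  "Qgrad K l \<phi> G x = (\<Sum>\<alpha>\<in>UNIV. Qf K l (\<phi> x) (G x \<alpha>))"

definition Cc_inf :: "field \<Rightarrow> nat \<Rightarrow> (real^'n::finite) set \<Rightarrow> (real^'n \<Rightarrow> nat \<Rightarrow> real) \<Rightarrow> bool" where
  "Cc_inf K l S w \<longleftrightarrow> (\<forall>x. in_Rm1 K l (w x)) \<and> (\<forall>k. Cinf UNIV (\<lambda>x. w x k)) \<and>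
     (\<exists>C. compact C \<and> C \<subseteq> S \<and> (\<forall>x. x \<notin> C \<longrightarrow> w x = (\<lambda>k. 0)))"

definition Cc_inf_scalar :: "(real^'n::finite) set \<Rightarrow> (real^'n \<Rightarrow> real) \<Rightarrow> bool" where
  "Cc_inf_scalar S \<psi> \<longleftrightarrow> Cinf UNIV \<psi> \<and> (\<exists>C. compact C \<and> C \<subseteq> S \<and> (\<forall>x. x \<notin> C \<longrightarrow> \<psi> x = 0))"

text \<open>G is the weak gradient of v on S: G x alpha k = d_alpha v_k (x)\<close>
definition weak_grad :: "(real^'n::finite) set \<Rightarrow> (real^'n \<Rightarrow> nat \<Rightarrow> real) \<Rightarrow> (real^'n \<Rightarrow> 'n \<Rightarrow> nat \<Rightarrow> real) \<Rightarrow> bool" where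
  "weak_grad S v G \<longleftrightarrow> (\<forall>\<psi> \<alpha> k. Cc_inf_scalar S \<psi> \<longrightarrow>
      integrable (lebesgue_on S) (\<lambda>x. v x k * pd \<alpha> \<psi> x) \<and>
      integrable (lebesgue_on S) (\<lambda>x. G x \<alpha> k * \<psi> x) \<and>
      (\<integral>x. v x k * pd \<alpha> \<psi> x \<partial>lebesgue_on S) = - (\<integral>x. G x \<alpha> k * \<psi> x \<partial>lebesgue_on S))"

definition H10 :: "field \<Rightarrow> nat \<Rightarrow> (real^'n::finite) set \<Rightarrow> (real^'n) set \<Rightarrow> (real^'n \<Rightarrow> nat \<Rightarrow> real)
     \<Rightarrow> (real^'n \<Rightarrow> nat \<Rightarrow> real) \<Rightarrow> (real^'n \<Rightarrow> 'n \<Rightarrow> nat \<Rightarrow> real) \<Rightarrow> bool" where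
  "H10 K l \<Omega> \<Sigma> \<phi> v G \<longleftrightarrow>
     (\<forall>x. in_Rm1 K l (v x)) \<and> (\<forall>x \<alpha>. in_Rm1 K l (G x \<alpha>)) \<and>
     (\<forall>k. (\<lambda>x. v x k) \<in> borel_measurable (lebesgue_on (\<Omega> - \<Sigma>))) \<and>
     (\<forall>\<alpha> k. (\<lambda>x. G x \<alpha> k) \<in> borel_measurable (lebesgue_on (\<Omega> - \<Sigma>))) \<and>
     weak_grad (\<Omega> - \<Sigma>) v G \<and>
     (\<integral>\<^sup>+x. ennreal (sqn K l (v x) + Qgrad K l \<phi> G x) \<partial>lebesgue_on (\<Omega> - \<Sigma>)) < \<infinity> \<and>
     (\<exists>w. (\<forall>j. Cc_inf K l (\<Omega> - \<Sigma>) (w j)) \<and>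
        (\<lambda>j. \<integral>\<^sup>+x. ennreal (sqn K l (\<lambda>k. w j x k - v x k)
              + Qgrad K l \<phi> (\<lambda>y \<alpha> k. pd \<alpha> (\<lambda>z. w j z k) y - G y \<alpha> k) x) \<partial>lebesgue_on (\<Omega> - \<Sigma>))
          \<longlonglongrightarrow> 0)"

definition sigma_singular :: "field \<Rightarrow> nat \<Rightarrow> real \<Rightarrow> (real^'n::finite) set \<Rightarrow> (real^'n) set
     \<Rightarrow> (nat \<Rightarrow> real) \<Rightarrow> (real^'n \<Rightarrow> real) \<Rightarrow> bool" where
  "sigma_singular K l \<alpha> \<Omega> \<Sigma> c u0 \<longleftrightarrow>
     (let \<phi> = (\<lambda>x. gam c (u0 x)) in
       harmonic_map K l (\<Omega> - \<Sigma>) \<phi> \<and>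
       (\<forall>k<mdim K l. C2alpha_closure \<alpha> \<Omega> \<Sigma> (\<lambda>x. \<phi> x k)) \<and>
       (\<forall>s\<in>\<Sigma>. filterlim u0 at_top (at s within (\<Omega> - \<Sigma>))) \<and>
       (\<exists>\<delta>>0. \<exists>r>0. \<forall>x\<in>\<Omega> - \<Sigma>. infdist x \<Sigma> < r \<longrightarrow>
           edens K l \<phi> x \<ge> \<delta> / (infdist x \<Sigma>)^2))"

end

theory Submission
  imports Defs
begin

definition e0r :: "real \<Rightarrow> nat \<Rightarrow> real" where
  "e0r r = (\<lambda>j. if j = 0 then r else 0)"

definition dg :: "field \<Rightarrow> nat \<Rightarrow> real \<Rightarrow> real" where
  "dg K i r = (if i = 0 then 1 else if i < dimK K then exp (4*r) else exp (2*r))"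

lemma evec_app: "evec i k = (if k = i then 1 else 0)" by (simp add: evec_def)

lemma sum_evec: "finite A \<Longrightarrow> (\<Sum>k\<in>A. evec i k * evec j k) = (if i = j \<and> i \<in> A then 1 else 0)"
proof -
  assume A: "finite A"
  have "(\<lambda>k. evec i k * evec j k) = (\<lambda>k. if k = i then (if i = j then 1 else 0) else 0)"
    by (auto simp: evec_def fun_eq_iff)
  then have "(\<Sum>k\<in>A. evec i k * evec j k) = (\<Sum>k\<in>A. if k = i then (if i = j then 1 else 0) else 0)"
    by (simp only:)
  also have "\<dots> = (if i = j \<and> i \<in> A then 1 else 0)" using A by (simp add: sum.delta)
  finally show ?thesis .
qed

lemma dimK_pos: "dimK K \<ge> 1" by (cases K) auto

lemma mdim_ge: "l \<ge> 2 \<Longrightarrow> mdim K l \<ge> 2 * dimK K"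
  unfolding mdim_def by (simp add: mult_right_mono)

lemma thetaC_e0r: "thetaC l (e0r r) \<xi> = \<xi> 1"
  unfolding thetaC_def e0r_def by simp

lemma cyc1: "r \<in> {1..3} \<Longrightarrow> cyc r 1 = r"
  unfolding cyc_def by auto

lemma thetaH_e0r: "r \<in> {1..3} \<Longrightarrow> thetaH l r (e0r s) \<xi> = \<xi> r"
  unfolding thetaH_def e0r_def using cyc1[of r] by simp

lemma gcomp_e0r:
  assumes "i < mdim K l" "j < mdim K l"
  shows "gcomp K l (e0r r) i j = (if i = j then dg K i r else 0)"
proof (cases K)
  case RR
  then show ?thesis using assms
    unfolding gcomp_def by (simp add: sum_evec) (auto simp: dg_def mdim_def e0r_def evec_app)
next
  case CC
  then show ?thesis using assms
    unfolding gcomp_def by (simp add: sum_evec thetaC_e0r) (auto simp: dg_def mdim_def e0r_def evec_app)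
next
  case HH
  have s3: "(\<Sum>r'=1..3. thetaH l r' (e0r r) (evec i) * thetaH l r' (e0r r) (evec j))
     = (if i = j \<and> i \<in> {1..3} then 1 else 0)"
    by (simp add: thetaH_e0r sum_evec)
  show ?thesis using assms HH
    unfolding gcomp_def HH gmet.simps s3 by (simp add: sum_evec) (auto simp: dg_def mdim_def e0r_def evec_app)
qed

lemma thetaC_evec0: "thetaC l q (evec 0) = 0"
  unfolding thetaC_def by (simp add: evec_app)

lemma cyc_pos: "cyc r i \<ge> 1" unfolding cyc_def by simp

lemma thetaH_evec0: "thetaH l r q (evec 0) = 0"
  unfolding thetaH_def using cyc_pos[of r] by (simp add: evec_app Suc_le_eq)

lemma gcomp_0s: "gcomp K l q 0 s = (if s = 0 then 1 else 0)"
  by (cases K) (simp_all add: gcomp_def thetaC_evec0 thetaH_evec0 evec_app)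

lemma gcomp_s0: "gcomp K l q s 0 = (if s = 0 then 1 else 0)"
  by (cases K) (simp_all add: gcomp_def thetaC_evec0 thetaH_evec0 evec_app)

lemma ginv_diag:
  assumes g: "\<And>i j. i < mdim K l \<Longrightarrow> j < mdim K l \<Longrightarrow> gcomp K l p i j = (if i = j then d i else 0)"
    and d: "\<And>i. i < mdim K l \<Longrightarrow> d i \<noteq> 0"
  shows "ginv K l p = (\<lambda>i j. if i < mdim K l \<and> j < mdim K l \<and> i = j then 1 / d i else 0)"
    (is "_ = ?h")
  unfolding ginv_def
proof (rule the_equality)
  let ?m = "mdim K l"
  show "(\<forall>i<?m. \<forall>k<?m. (\<Sum>j<?m. gcomp K l p i j * ?h j k) = (if i = k then 1 else 0)) \<and>
      (\<forall>i j. \<not> (i < ?m \<and> j < ?m) \<longrightarrow> ?h i j = 0)"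
  proof (intro conjI allI impI)
    fix i k assume ik: "i < ?m" "k < ?m"
    have "(\<Sum>j<?m. gcomp K l p i j * ?h j k) = (\<Sum>j<?m. if j = i then d i * ?h i k else 0)"
      by (rule sum.cong) (auto simp: g ik)
    also have "\<dots> = d i * ?h i k" using ik by simp
    also have "\<dots> = (if i = k then 1 else 0)" using ik d[OF ik(1)] by auto
    finally show "(\<Sum>j<?m. gcomp K l p i j * ?h j k) = (if i = k then 1 else 0)" .
  qed auto
next
  let ?m = "mdim K l"
  fix h assume H: "(\<forall>i<?m. \<forall>k<?m. (\<Sum>j<?m. gcomp K l p i j * h j k) = (if i = k then 1 else 0)) \<and>
      (\<forall>i j. \<not> (i < ?m \<and> j < ?m) \<longrightarrow> h i j = 0)"
  show "h = ?h"
  proof (intro ext)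
    fix i k
    show "h i k = ?h i k"
    proof (cases "i < ?m \<and> k < ?m")
      case True
      have "(\<Sum>j<?m. gcomp K l p i j * h j k) = (\<Sum>j<?m. if j = i then d i * h i k else 0)"
        by (rule sum.cong) (auto simp: g True)
      also have "\<dots> = d i * h i k" using True by simp
      finally have "d i * h i k = (if i = k then 1 else 0)" using H True by simp
      then show ?thesis using True d[of i] by (auto simp: field_simps)
    next
      case False then show ?thesis using H by auto
    qed
  qed
qed

lemma dg_pos: "dg K i r > 0" unfolding dg_def by auto

lemma ginv_e0r: "ginv K l (e0r r) = (\<lambda>i j. if i < mdim K l \<and> j < mdim K l \<and> i = j then 1 / dg K i r else 0)"
  by (rule ginv_diag) (auto simp: gcomp_e0r dg_pos[THEN less_imp_neq, symmetric])

lemma pdM_const: "pdM i (\<lambda>q. c) p = 0" unfolding pdM_def by simp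

lemma e0r_upd: "(e0r r)(0 := t) = e0r t" unfolding e0r_def by auto

lemma e0r_0: "e0r r 0 = r" unfolding e0r_def by simp

lemma deriv_dg: "deriv (dg K i) r = (if i = 0 then 0 else if i < dimK K then 4 * exp (4*r) else 2 * exp (2*r))"
proof -
  have "(dg K i has_real_derivative (if i = 0 then 0 else if i < dimK K then 4 * exp (4*r) else 2 * exp (2*r))) (at r)"
    unfolding dg_def[abs_def] by (auto intro!: derivative_eq_intros)
  then show ?thesis by (rule DERIV_imp_deriv)
qed

lemma pdM0_gcomp:
  assumes "i < mdim K l" "j < mdim K l"
  shows "pdM 0 (\<lambda>q. gcomp K l q i j) (e0r r) = (if i = j then deriv (dg K i) r else 0)"
proof -
  have "(\<lambda>t. gcomp K l ((e0r r)(0 := t)) i j) = (\<lambda>t. if i = j then dg K i t else 0)"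
    using assms by (simp add: e0r_upd gcomp_e0r)
  then show ?thesis unfolding pdM_def e0r_0 by (cases "i = j") (simp_all add: dg_def[abs_def])
qed

lemma kk_lt: "l \<ge> 2 \<Longrightarrow> dimK K < mdim K l"
  using dimK_pos[of K] unfolding mdim_def
  by (metis less_le_trans mult_le_mono1 mult_2 mult.commute less_add_same_cancel1 zero_less_one less_le_trans[of 0 1] le_trans)

lemma dg_kk: "dg K (dimK K) r = exp (2*r)" using dimK_pos[of K] unfolding dg_def by auto

lemma dg_0: "dg K i 0 = 1" unfolding dg_def by auto

lemma Chr_a00: "Chr K l a 0 0 q = 0"
  unfolding Chr_def by (simp add: gcomp_0s gcomp_s0 pdM_const)

lemma Chr_kk_kk_0:
  assumes l: "l \<ge> 2"
  shows "Chr K l (dimK K) (dimK K) 0 (e0r r) = 1"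
proof -
  let ?m = "mdim K l" and ?k = "dimK K"
  have k: "?k < ?m" using kk_lt[OF l] .
  have "Chr K l ?k ?k 0 (e0r r) = 1/2 * (\<Sum>s<?m. if s = ?k then (1 / dg K ?k r) * pdM 0 (\<lambda>q. gcomp K l q ?k ?k) (e0r r) else 0)"
    unfolding Chr_def ginv_e0r
    by (intro arg_cong[where f="\<lambda>x. 1/2 * x"] sum.cong) (auto simp: gcomp_0s gcomp_s0 pdM_const k)
  also have "\<dots> = 1/2 * ((1 / dg K ?k r) * pdM 0 (\<lambda>q. gcomp K l q ?k ?k) (e0r r))"
    using k by simp
  also have "\<dots> = 1"
    using k dimK_pos[of K] by (simp add: pdM0_gcomp deriv_dg dg_kk exp_not_eq_zero)
  finally show ?thesis .
qed

lemma Chr_s_kk_0: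
  assumes l: "l \<ge> 2" and s: "s < mdim K l"
  shows "Chr K l s (dimK K) 0 (e0r 0) = (if s = dimK K then 1 else 0)"
proof -
  let ?m = "mdim K l" and ?k = "dimK K"
  have k: "?k < ?m" using kk_lt[OF l] .
  have "Chr K l s ?k 0 (e0r 0) = 1/2 * (\<Sum>t<?m. if t = s then pdM 0 (\<lambda>q. gcomp K l q ?k s) (e0r 0) else 0)"
    unfolding Chr_def ginv_e0r
    by (intro arg_cong[where f="\<lambda>x. 1/2 * x"] sum.cong) (auto simp: gcomp_0s gcomp_s0 pdM_const k s dg_0)
  also have "\<dots> = 1/2 * pdM 0 (\<lambda>q. gcomp K l q ?k s) (e0r 0)"
    using s by simp
  also have "\<dots> = (if s = dimK K then 1 else 0)"
    using k s dimK_pos[of K] by (simp add: pdM0_gcomp deriv_dg)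
  finally show ?thesis .
qed

lemma Chr_kk_0_s:
  assumes l: "l \<ge> 2" and s: "s < mdim K l"
  shows "Chr K l (dimK K) 0 s (e0r 0) = (if s = dimK K then 1 else 0)"
proof -
  let ?m = "mdim K l" and ?k = "dimK K"
  have k: "?k < ?m" using kk_lt[OF l] .
  have "Chr K l ?k 0 s (e0r 0) = 1/2 * (\<Sum>t<?m. if t = ?k then pdM 0 (\<lambda>q. gcomp K l q s ?k) (e0r 0) else 0)"
    unfolding Chr_def ginv_e0r
    by (intro arg_cong[where f="\<lambda>x. 1/2 * x"] sum.cong) (auto simp: gcomp_0s gcomp_s0 pdM_const k s dg_0)
  also have "\<dots> = 1/2 * pdM 0 (\<lambda>q. gcomp K l q s ?k) (e0r 0)"
    using k by simp
  also have "\<dots> = (if s = dimK K then 1 else 0)"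
    using k s dimK_pos[of K] by (simp add: pdM0_gcomp deriv_dg)
  finally show ?thesis .
qed

lemma Riem_val:
  assumes l: "l \<ge> 2"
  shows "Riem K l (dimK K) (dimK K) 0 0 (e0r 0) = -1"
proof -
  let ?m = "mdim K l" and ?k = "dimK K"
  have k: "?k < ?m" using kk_lt[OF l] .
  have d1: "pdM ?k (Chr K l ?k 0 0) (e0r 0) = 0"
    unfolding Chr_a00[abs_def] pdM_def by simp
  have d2: "pdM 0 (Chr K l ?k ?k 0) (e0r 0) = 0"
    unfolding pdM_def e0r_upd Chr_kk_kk_0[OF l] by simp
  have "(\<Sum>s<?m. Chr K l s 0 0 (e0r 0) * Chr K l ?k ?k s (e0r 0) - Chr K l s ?k 0 (e0r 0) * Chr K l ?k 0 s (e0r 0))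
     = (\<Sum>s<?m. if s = ?k then -1 else 0)"
    by (rule sum.cong) (auto simp: Chr_a00 Chr_s_kk_0[OF l] Chr_kk_0_s[OF l])
  also have "\<dots> = -1" using k by simp
  finally show ?thesis unfolding Riem_def d1 d2 by simp
qed

lemma sum_evec1: "k < m \<Longrightarrow> (\<Sum>i<m. evec k i * f i) = (f k :: real)"
proof -
  assume k: "k < m"
  have "(\<Sum>i<m. evec k i * f i) = (\<Sum>i<m. if i = k then f k else 0)"
    by (rule sum.cong) (auto simp: evec_app)
  then show ?thesis using k by simp
qed

lemma RXYZ_val:
  assumes l: "l \<ge> 2"
  shows "RXYZ K l (e0r 0) (evec (dimK K)) (evec 0) (evec 0) (dimK K) = -1"
proof -
  let ?m = "mdim K l" and ?k = "dimK K"
  have k: "?k < ?m" using kk_lt[OF l] .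
  have m0: "0 < ?m" using k by simp
  let ?R = "\<lambda>i j k. Riem K l ?k i j k (e0r 0)"
  have "RXYZ K l (e0r 0) (evec ?k) (evec 0) (evec 0) ?k
      = (\<Sum>i<?m. evec ?k i * (\<Sum>j<?m. evec 0 j * (\<Sum>k<?m. evec 0 k * ?R i j k)))"
    unfolding RXYZ_def by (simp add: sum_distrib_left mult.assoc)
  also have "\<dots> = ?R ?k 0 0" using k m0 by (simp add: sum_evec1)
  finally show ?thesis using Riem_val[OF l] by simp
qed

lemma gmet_p0_kk:
  assumes l: "l \<ge> 2"
  shows "gmet K l (e0r 0) \<xi> (evec (dimK K)) = \<xi> (dimK K)"
proof (cases K)
  case RR
  have "(\<Sum>k = 1..l - 1. \<xi> k * evec 1 k) = (\<Sum>k = 1..l - 1. if k = 1 then \<xi> 1 else 0)"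
    by (rule sum.cong) (auto simp: evec_app)
  also have "\<dots> = \<xi> 1" using l by simp
  finally show ?thesis using RR by (simp add: evec_app e0r_0)
next
  case CC
  have "(\<Sum>k = 2..2*l - 1. \<xi> k * evec 2 k) = (\<Sum>k = 2..2*l - 1. if k = 2 then \<xi> 2 else 0)"
    by (rule sum.cong) (auto simp: evec_app)
  also have "\<dots> = \<xi> 2" using l by simp
  finally show ?thesis using CC by (simp add: evec_app e0r_0 thetaC_e0r)
next
  case HH
  have "(\<Sum>k = 4..4*l - 1. \<xi> k * evec 4 k) = (\<Sum>k = 4..4*l - 1. if k = 4 then \<xi> 4 else 0)"
    by (rule sum.cong) (auto simp: evec_app)
  also have "\<dots> = \<xi> 4" using l by simp
  moreover have "(\<Sum>r=1..3. thetaH l r (e0r 0) \<xi> * thetaH l r (e0r 0) (evec 4)) = 0"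
    by (rule sum.neutral) (auto simp: thetaH_e0r evec_app)
  ultimately show ?thesis using HH by (simp add: e0r_0 evec_app)
qed

lemma a_le_1:
  assumes l: "l \<ge> 2"
    and curv: "\<And>p X Y. in_coords K l p \<Longrightarrow> in_coords K l X \<Longrightarrow> in_coords K l Y \<Longrightarrow>
                 gmet K l p X X * gmet K l p Y Y - (gmet K l p X Y)^2 \<noteq> 0 \<Longrightarrow>
                 sec K l p X Y \<le> - (a^2)"
  shows "a^2 \<le> 1"
proof -
  let ?m = "mdim K l" and ?k = "dimK K"
  have k: "?k < ?m" using kk_lt[OF l] .
  have m0: "0 < ?m" using k by simp
  have g1: "gmet K l (e0r 0) (evec ?k) (evec ?k) = 1"
    using gcomp_e0r[OF k k, of 0] unfolding gcomp_def by (simp add: dg_0)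
  have g2: "gmet K l (e0r 0) (evec 0) (evec 0) = 1"
    using gcomp_0s[of K l "e0r 0" 0] unfolding gcomp_def by simp
  have g3: "gmet K l (e0r 0) (evec ?k) (evec 0) = 0"
    using gcomp_s0[of K l "e0r 0" ?k] dimK_pos[of K] unfolding gcomp_def by simp
  have ic: "in_coords K l (e0r 0)" "in_coords K l (evec ?k)" "in_coords K l (evec 0)"
    using k m0 by (auto simp: in_coords_def e0r_def evec_app)
  have "sec K l (e0r 0) (evec ?k) (evec 0) \<le> - (a^2)"
    by (rule curv[OF ic]) (simp add: g1 g2 g3)
  moreover have "sec K l (e0r 0) (evec ?k) (evec 0) = -1"
    unfolding sec_def g1 g2 g3 gmet_p0_kk[OF l] RXYZ_val[OF l] by (simp add: evec_app)
  ultimately show ?thesis by simp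
qed

lemma line_deriv:
  fixes \<psi> :: "real^'n::finite \<Rightarrow> real"
  assumes diff: "\<And>y. (\<lambda>t. \<psi> (y + t *\<^sub>R axis \<alpha> 1)) differentiable (at 0)"
  shows "((\<lambda>t. \<psi> (x + t *\<^sub>R axis \<alpha> 1)) has_real_derivative pd \<alpha> \<psi> (x + z *\<^sub>R axis \<alpha> 1)) (at z)"
proof -
  let ?e = "axis \<alpha> (1::real) :: real^'n"
  let ?y = "x + z *\<^sub>R ?e"
  have d: "((\<lambda>s. \<psi> (?y + s *\<^sub>R ?e)) has_real_derivative pd \<alpha> \<psi> ?y) (at 0)"
    unfolding pd_def using diff[of ?y] DERIV_deriv_iff_real_differentiable by blast
  have d2: "((\<lambda>t. t - z) has_real_derivative 1) (at z)"
    by (auto intro!: derivative_eq_intros)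
  have "((\<lambda>t. \<psi> (?y + (t - z) *\<^sub>R ?e)) has_real_derivative pd \<alpha> \<psi> ?y * 1) (at z)"
    using DERIV_chain2[of "\<lambda>s. \<psi> (?y + s *\<^sub>R ?e)" "pd \<alpha> \<psi> ?y" "\<lambda>t. t - z" z 1] d d2 by simp
  moreover have "\<And>t. ?y + (t - z) *\<^sub>R ?e = x + t *\<^sub>R ?e"
    by (simp add: algebra_simps)
  ultimately show ?thesis by simp
qed

lemma pd_integral_zero:
  fixes \<psi> :: "real^'n::finite \<Rightarrow> real"
  assumes cont: "continuous_on UNIV \<psi>"
    and diff: "\<And>y. (\<lambda>t. \<psi> (y + t *\<^sub>R axis \<alpha> 1)) differentiable (at 0)"
    and contd: "continuous_on UNIV (pd \<alpha> \<psi>)"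
    and C: "compact C" and supp: "\<And>x. x \<notin> C \<Longrightarrow> \<psi> x = 0"
  shows "integrable lborel (pd \<alpha> \<psi>) \<and> integral\<^sup>L lborel (pd \<alpha> \<psi>) = 0"
proof -
  let ?e = "axis \<alpha> (1::real) :: real^'n"
  let ?D = "pd \<alpha> \<psi>"
  obtain R where R: "R \<ge> 0" "C \<subseteq> cball 0 R"
    using compact_imp_bounded[OF C] bounded_subset_cball by (metis bounded_pos less_imp_le mem_cball_0 subsetI)
  obtain B where B: "B \<ge> 0" "\<And>x. x \<in> cball 0 (R+2) \<Longrightarrow> norm (?D x) \<le> B"
    using continuous_on_compact_bound[of "cball (0::real^'n) (R+2)" ?D] contd
    by (metis compact_cball continuous_on_subset subset_UNIV)
  obtain B' where B': "B' \<ge> 0" "\<And>x. x \<in> cball 0 R \<Longrightarrow> norm (\<psi> x) \<le> B'"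
    using continuous_on_compact_bound[of "cball (0::real^'n) R" \<psi>] cont
    by (metis compact_cball continuous_on_subset subset_UNIV)
  have out: "\<psi> x = 0" if "norm x > R" for x
    using supp R that by (metis mem_cball_0 not_le subsetD)
  have mpsi[measurable]: "\<psi> \<in> borel_measurable borel"
    using cont by (rule borel_measurable_continuous_onI)
  have mD[measurable]: "?D \<in> borel_measurable borel"
    using contd by (rule borel_measurable_continuous_onI)
  have int_ind: "integrable lborel (indicator (cball (0::real^'n) r) :: real^'n \<Rightarrow> real)" for r
    by (intro integrable_real_indicator emeasure_bounded_finite) auto
  have int_psi: "integrable lborel \<psi>"
  proof (rule Bochner_Integration.integrable_bound[where f="\<lambda>x. B' * indicator (cball (0::real^'n) R) x"])
    show "integrable lborel (\<lambda>x. B' * indicator (cball (0::real^'n) R) x)"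
      by (intro integrable_mult_right int_ind)
    show "\<psi> \<in> borel_measurable lborel" by simp
    show "AE x in lborel. norm (\<psi> x) \<le> norm (B' * indicator (cball (0::real^'n) R) x :: real)"
      using B' out by (auto simp: indicator_def not_le)
  qed
  have transl: "integral\<^sup>L lborel (\<lambda>x. \<psi> (x + c)) = integral\<^sup>L lborel \<psi>" for c :: "real^'n"
  proof -
    have "integral\<^sup>L lborel \<psi> = integral\<^sup>L (distr lborel borel ((+) c)) \<psi>"
      by (simp add: lborel_distr_plus)
    also have "\<dots> = integral\<^sup>L lborel (\<lambda>x. \<psi> (c + x))"
      by (rule integral_distr) auto
    finally show ?thesis by (simp add: add.commute)
  qed
  have int_psi_t: "integrable lborel (\<lambda>x. \<psi> (x + c))" for c :: "real^'n"
  proof -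
    have "integrable (distr lborel borel ((+) c)) \<psi>"
      using int_psi by (simp add: lborel_distr_plus)
    then have "integrable lborel (\<lambda>x. \<psi> (c + x))"
      by (subst (asm) integrable_distr_eq) auto
    then show ?thesis by (simp add: add.commute)
  qed
  define h :: "nat \<Rightarrow> real" where "h i = 1 / (real i + 1)" for i
  have h_pos: "h i > 0" "h i \<le> 1" for i unfolding h_def by (auto simp: field_simps)
  define s where "s i x = (\<psi> (x + h i *\<^sub>R ?e) - \<psi> x) / h i" for i x
  have ms[measurable]: "s i \<in> borel_measurable lborel" for i
    unfolding s_def by measurable
  have hlim: "filterlim h (at 0) sequentially"
  proof -
    have "h \<longlonglongrightarrow> 0" unfolding h_def using LIMSEQ_inverse_real_of_nat
      by (simp add: inverse_eq_divide add.commute)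
    moreover have "\<forall>\<^sub>F i in sequentially. h i \<in> UNIV - {0}" using h_pos by (simp add: always_eventually less_imp_neq[symmetric])
    ultimately show ?thesis by (simp add: filterlim_at eventually_mono)
  qed
  have lim: "(\<lambda>i. s i x) \<longlonglongrightarrow> ?D x" for x
  proof -
    have "((\<lambda>t. \<psi> (x + t *\<^sub>R ?e)) has_real_derivative ?D x) (at 0)"
      using line_deriv[OF diff, of x 0] by simp
    then have "((\<lambda>t. (\<psi> (x + t *\<^sub>R ?e) - \<psi> x) / t) \<longlongrightarrow> ?D x) (at 0)"
      unfolding has_field_derivative_iff by simp
    from filterlim_compose[OF this hlim] show ?thesis unfolding s_def o_def by simp
  qed
  have bound: "norm (s i x) \<le> B * indicator (cball 0 (R+1)) x" for i x
  proof (cases "norm x \<le> R + 1")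
    case True
    obtain z where z: "0 < z" "z < h i"
      "\<psi> (x + h i *\<^sub>R ?e) - \<psi> (x + 0 *\<^sub>R ?e) = (h i - 0) * ?D (x + z *\<^sub>R ?e)"
      using MVT2[of 0 "h i" "\<lambda>t. \<psi> (x + t *\<^sub>R ?e)" "\<lambda>z. ?D (x + z *\<^sub>R ?e)"] h_pos[of i]
        line_deriv[OF diff] by blast
    have "s i x = ?D (x + z *\<^sub>R ?e)" using z h_pos[of i] unfolding s_def by simp
    moreover have "norm (x + z *\<^sub>R ?e) \<le> R + 2"
    proof -
      have "norm (x + z *\<^sub>R ?e) \<le> norm x + norm (z *\<^sub>R ?e)" by (rule norm_triangle_ineq)
      also have "\<dots> = norm x + z" using z by simp
      finally show ?thesis using True z h_pos[of i] by simp
    qed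
    ultimately show ?thesis using B True by (simp add: indicator_def)
  next
    case False
    have "norm (x + h i *\<^sub>R ?e) \<ge> norm x - norm (h i *\<^sub>R ?e)" by (metis norm_diff_ineq norm_minus_cancel diff_minus_eq_add)
    moreover have "norm (h i *\<^sub>R ?e) \<le> 1" using h_pos[of i] by simp
    ultimately have "norm (x + h i *\<^sub>R ?e) > R" using False by simp
    then show ?thesis using out[of x] out[of "x + h i *\<^sub>R ?e"] False R by (simp add: s_def indicator_def)
  qed
  have w_int: "integrable lborel (\<lambda>x. B * indicator (cball (0::real^'n) (R+1)) x)"
    by (intro integrable_mult_right int_ind)
  have mD': "?D \<in> borel_measurable lborel" by simp
  have AEl: "AE x in lborel. (\<lambda>i. s i x) \<longlonglongrightarrow> ?D x" using lim by simp
  have AEb: "AE x in lborel. norm (s i x) \<le> B * indicator (cball (0::real^'n) (R+1)) x" for i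
    using bound by simp
  have dc: "integrable lborel ?D" "(\<lambda>i. integral\<^sup>L lborel (s i)) \<longlonglongrightarrow> integral\<^sup>L lborel ?D"
    using integrable_dominated_convergence[OF mD' ms w_int AEl AEb]
      integral_dominated_convergence[OF mD' ms w_int AEl AEb] by auto
  have s0: "integral\<^sup>L lborel (s i) = 0" for i
  proof -
    have "integral\<^sup>L lborel (s i) = (integral\<^sup>L lborel (\<lambda>x. \<psi> (x + h i *\<^sub>R ?e)) - integral\<^sup>L lborel \<psi>) / h i"
      unfolding s_def using int_psi int_psi_t by simp
    then show ?thesis using transl by simp
  qed
  have "(\<lambda>i. integral\<^sup>L lborel (s i)) \<longlonglongrightarrow> 0" unfolding s0 by (rule tendsto_const)
  then have "integral\<^sup>L lborel ?D = 0"
    using LIMSEQ_unique[OF dc(2)] by metis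
  with dc show ?thesis by simp
qed

lemma cs_integrable:
  fixes g :: "real^'n::finite \<Rightarrow> real"
  assumes cont: "continuous_on UNIV g" and C: "compact C" and supp: "\<And>x. x \<notin> C \<Longrightarrow> g x = 0"
  shows "integrable lborel g"
proof -
  obtain R where R: "R \<ge> 0" "C \<subseteq> cball 0 R"
    using compact_imp_bounded[OF C] bounded_subset_cball by (metis bounded_pos less_imp_le mem_cball_0 subsetI)
  obtain B' where B': "B' \<ge> 0" "\<And>x. x \<in> cball 0 R \<Longrightarrow> norm (g x) \<le> B'"
    using continuous_on_compact_bound[of "cball (0::real^'n) R" g] cont
    by (metis compact_cball continuous_on_subset subset_UNIV)
  have int_ind: "integrable lborel (indicator (cball (0::real^'n) R) :: real^'n \<Rightarrow> real)"
    by (intro integrable_real_indicator emeasure_bounded_finite) auto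
  have mg[measurable]: "g \<in> borel_measurable borel"
    using cont by (rule borel_measurable_continuous_onI)
  show ?thesis
  proof (rule Bochner_Integration.integrable_bound[where f="\<lambda>x. B' * indicator (cball (0::real^'n) R) x"])
    show "integrable lborel (\<lambda>x. B' * indicator (cball (0::real^'n) R) x)"
      by (intro integrable_mult_right int_ind)
    show "g \<in> borel_measurable lborel" by simp
    show "AE x in lborel. norm (g x) \<le> norm (B' * indicator (cball (0::real^'n) R) x :: real)"
      using B' supp R by (auto simp: indicator_def subset_iff)
  qed
qed

lemma cont_patch:
  fixes F G :: "real^'n::finite \<Rightarrow> real"
  assumes S: "open S" and C: "compact C" "C \<subseteq> S" and G: "continuous_on S G"
    and FG: "\<And>x. x \<in> S \<Longrightarrow> F x = G x" and F0: "\<And>x. x \<notin> C \<Longrightarrow> F x = 0"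
  shows "continuous_on UNIV F"
proof -
  have "continuous_on (S \<union> (- C)) F"
  proof (rule continuous_on_open_Un)
    show "open S" by fact
    show "open (- C)" using C by (simp add: compact_imp_closed open_Compl)
    show "continuous_on S F" using G FG by (metis continuous_on_cong)
    show "continuous_on (- C) F" using F0 continuous_on_const[of "- C" 0]
      by (metis ComplD continuous_on_cong)
  qed
  moreover have "S \<union> (- C) = UNIV" using C by auto
  ultimately show ?thesis by simp
qed

lemma nn_S_lborel:
  fixes F G :: "real^'n::finite \<Rightarrow> real"
  assumes S: "open S" and FG: "\<And>x. x \<in> S \<Longrightarrow> F x = G x" and F0: "\<And>x. x \<notin> S \<Longrightarrow> F x = 0"
    and nn: "\<And>x. F x \<ge> 0" and int: "integrable lborel F"
  shows "(\<integral>\<^sup>+x. ennreal (G x) \<partial>lebesgue_on S) = ennreal (integral\<^sup>L lborel F)"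
proof -
  have Sl: "S \<inter> space lebesgue \<in> sets lebesgue" using S by simp
  have "(\<integral>\<^sup>+x. ennreal (G x) \<partial>lebesgue_on S) = (\<integral>\<^sup>+x. ennreal (G x) * indicator S x \<partial>lebesgue)"
    by (rule nn_integral_restrict_space[OF Sl])
  also have "\<dots> = (\<integral>\<^sup>+x. ennreal (G x) * indicator S x \<partial>lborel)"
    by (rule nn_integral_completion)
  also have "\<dots> = (\<integral>\<^sup>+x. ennreal (F x) \<partial>lborel)"
    by (rule nn_integral_cong) (auto simp: FG F0 indicator_def)
  also have "\<dots> = ennreal (integral\<^sup>L lborel F)"
    by (rule nn_integral_eq_integral[OF int]) (simp add: nn)
  finally show ?thesis .
qed

lemma line_zero:
  fixes g :: "real^'n::finite \<Rightarrow> real"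
  assumes C: "compact C" and y: "y \<notin> C" and g0: "\<And>x. x \<notin> C \<Longrightarrow> g x = 0"
  shows "((\<lambda>t. g (y + t *\<^sub>R e)) has_real_derivative 0) (at 0)"
proof -
  let ?T = "(\<lambda>t::real. y + t *\<^sub>R e) -` (- C)"
  have "open ?T"
    by (rule open_vimage) (auto simp: C compact_imp_closed open_Compl intro!: continuous_intros)
  moreover have "0 \<in> ?T" using y by simp
  ultimately show ?thesis
    by (rule has_field_derivative_transform_within_open[OF DERIV_const]) (simp add: g0)
qed

lemma line_DERIV:
  fixes g :: "real^'n::finite \<Rightarrow> real"
  assumes "(\<lambda>t. g (y + t *\<^sub>R axis i 1)) differentiable (at 0)"
  shows "((\<lambda>t. g (y + t *\<^sub>R axis i 1)) has_real_derivative pd i g y) (at 0)"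
  using assms unfolding pd_def using DERIV_deriv_iff_real_differentiable by blast

lemma pd_eqI:
  fixes g :: "real^'n::finite \<Rightarrow> real"
  assumes "((\<lambda>t. g (y + t *\<^sub>R axis i 1)) has_real_derivative D) (at 0)"
  shows "pd i g y = D"
  using assms unfolding pd_def by (rule DERIV_imp_deriv)

lemma smooth_scalar:
  fixes u f :: "real^'n::finite \<Rightarrow> real" and S C :: "(real^'n) set" and lam :: real
  assumes S: "open S" and C: "compact C" "C \<subseteq> S"
    and u1: "\<And>x i. x \<in> S \<Longrightarrow> (\<lambda>t. u (x + t *\<^sub>R axis i 1)) differentiable (at 0)"
    and u2: "\<And>x i j. x \<in> S \<Longrightarrow> (\<lambda>t. pd i u (x + t *\<^sub>R axis j 1)) differentiable (at 0)"
    and cu: "continuous_on S u" and cpu: "\<And>i. continuous_on S (pd i u)"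
    and cppu: "\<And>i j. continuous_on S (pd j (pd i u))"
    and harm: "\<And>x. x \<in> S \<Longrightarrow> (\<Sum>\<alpha>\<in>UNIV. pd \<alpha> (pd \<alpha> u) x) = 0"
    and f1: "\<And>x i. (\<lambda>t. f (x + t *\<^sub>R axis i 1)) differentiable (at 0)"
    and cf: "continuous_on UNIV f" and cpf: "\<And>i. continuous_on UNIV (pd i f)"
    and fsupp: "\<And>x. x \<notin> C \<Longrightarrow> f x = 0"
    and lam: "lam \<ge> 2"
  shows "(\<integral>\<^sup>+x. ennreal (exp (lam * u x) * (f x)^2 * (\<Sum>\<alpha>\<in>UNIV. (pd \<alpha> u x)^2)) \<partial>lebesgue_on S)
       \<le> (\<integral>\<^sup>+x. ennreal (exp (lam * u x) * (\<Sum>\<alpha>\<in>UNIV. (pd \<alpha> f x)^2)) \<partial>lebesgue_on S)"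
proof -
  define \<psi> where "\<psi> \<alpha> x = (if x \<in> S then exp (lam * u x) * pd \<alpha> u x * (f x)^2 else 0)" for \<alpha> x
  define Fa where "Fa \<alpha> y = exp (lam * u y) * (lam * (pd \<alpha> u y)^2 * (f y)^2 + pd \<alpha> (pd \<alpha> u) y * (f y)^2
        + 2 * pd \<alpha> u y * f y * pd \<alpha> f y)" for \<alpha> y
  have cfS: "continuous_on S f" using cf continuous_on_subset by blast
  have cpfS: "continuous_on S (pd i f)" for i using cpf continuous_on_subset by blast
  have pdf0: "pd i f y = 0" if "y \<notin> C" for i y
    by (rule pd_eqI, rule line_zero[OF C(1) that]) (simp add: fsupp)
  have psi0: "\<psi> \<alpha> x = 0" if "x \<notin> C" for \<alpha> x
    using fsupp[OF that] by (simp add: \<psi>_def)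
  have dpsiS: "((\<lambda>t. \<psi> \<alpha> (y + t *\<^sub>R axis \<alpha> 1)) has_real_derivative Fa \<alpha> y) (at 0)" if y: "y \<in> S" for \<alpha> y
  proof -
    let ?e = "axis \<alpha> (1::real) :: real^'n"
    have dU: "((\<lambda>t. u (y + t *\<^sub>R ?e)) has_real_derivative pd \<alpha> u y) (at 0)"
      by (rule line_DERIV[OF u1[OF y]])
    have dP: "((\<lambda>t. pd \<alpha> u (y + t *\<^sub>R ?e)) has_real_derivative pd \<alpha> (pd \<alpha> u) y) (at 0)"
      by (rule line_DERIV[OF u2[OF y]])
    have dF: "((\<lambda>t. f (y + t *\<^sub>R ?e)) has_real_derivative pd \<alpha> f y) (at 0)"
      by (rule line_DERIV[OF f1])
    have dE: "((\<lambda>t. exp (lam * u (y + t *\<^sub>R ?e))) has_real_derivative exp (lam * u y) * (lam * pd \<alpha> u y)) (at 0)"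
      using DERIV_chain2[OF DERIV_exp DERIV_cmult[OF dU, of lam]] by simp
    have dF2: "((\<lambda>t. (f (y + t *\<^sub>R ?e))^2) has_real_derivative 2 * f y * pd \<alpha> f y) (at 0)"
      using DERIV_power[OF dF, of 2] by (simp add: mult_ac)
    have dprod: "((\<lambda>t. exp (lam * u (y + t *\<^sub>R ?e)) * pd \<alpha> u (y + t *\<^sub>R ?e) * (f (y + t *\<^sub>R ?e))^2)
        has_real_derivative Fa \<alpha> y) (at 0)"
      by (rule DERIV_cong[OF DERIV_mult[OF DERIV_mult[OF dE dP] dF2]]) (simp add: Fa_def algebra_simps power2_eq_square)
    let ?T = "(\<lambda>t::real. y + t *\<^sub>R ?e) -` S"
    have "open ?T"
      by (rule open_vimage) (auto simp: S intro!: continuous_intros)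
    moreover have "0 \<in> ?T" using y by simp
    ultimately show ?thesis
      by (rule has_field_derivative_transform_within_open[OF dprod]) (simp add: \<psi>_def)
  qed
  have dpsi0: "((\<lambda>t. \<psi> \<alpha> (y + t *\<^sub>R axis \<alpha> 1)) has_real_derivative 0) (at 0)" if y: "y \<notin> C" for \<alpha> y
    by (rule line_zero[OF C(1) y psi0])
  have pdpsiS: "pd \<alpha> (\<psi> \<alpha>) y = Fa \<alpha> y" if "y \<in> S" for \<alpha> y
    using pd_eqI[OF dpsiS[OF that]] .
  have pdpsi0: "pd \<alpha> (\<psi> \<alpha>) y = 0" if "y \<notin> C" for \<alpha> y
    using pd_eqI[OF dpsi0[OF that]] .
  have diffpsi: "(\<lambda>t. \<psi> \<alpha> (y + t *\<^sub>R axis \<alpha> 1)) differentiable (at 0)" for \<alpha> y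
  proof (cases "y \<in> S")
    case True then show ?thesis using dpsiS real_differentiable_def by blast
  next
    case False then have "y \<notin> C" using C by auto
    then show ?thesis using dpsi0 real_differentiable_def by blast
  qed
  have cpsi: "continuous_on UNIV (\<psi> \<alpha>)" for \<alpha>
    by (rule cont_patch[OF S C, where G="\<lambda>x. exp (lam * u x) * pd \<alpha> u x * (f x)^2"])
       (auto simp: \<psi>_def psi0 fsupp intro!: continuous_intros cu cpu cfS)
  have cpdpsi: "continuous_on UNIV (pd \<alpha> (\<psi> \<alpha>))" for \<alpha>
    by (rule cont_patch[OF S C, where G="Fa \<alpha>"])
       (auto simp: Fa_def pdpsiS pdpsi0 intro!: continuous_intros cu cpu cppu cfS cpfS)
  have ibp: "integrable lborel (pd \<alpha> (\<psi> \<alpha>)) \<and> integral\<^sup>L lborel (pd \<alpha> (\<psi> \<alpha>)) = 0" for \<alpha>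
    by (rule pd_integral_zero[OF cpsi diffpsi cpdpsi C(1) psi0])
  define Sig where "Sig y = (\<Sum>\<alpha>\<in>UNIV. pd \<alpha> (\<psi> \<alpha>) y)" for y
  have intSig: "integrable lborel Sig" unfolding Sig_def using ibp by auto
  have Sig0: "integral\<^sup>L lborel Sig = 0" unfolding Sig_def using ibp by (simp add: integral_sum)
  define F1 where "F1 y = (if y \<in> S then exp (lam * u y) * (f y)^2 * (\<Sum>\<alpha>\<in>UNIV. (pd \<alpha> u y)^2) else 0)" for y
  define F2 where "F2 y = (if y \<in> S then exp (lam * u y) * (\<Sum>\<alpha>\<in>UNIV. (pd \<alpha> f y)^2) else 0)" for y
  have cF1: "continuous_on UNIV F1"
    by (rule cont_patch[OF S C, where G="\<lambda>y. exp (lam * u y) * (f y)^2 * (\<Sum>\<alpha>\<in>UNIV. (pd \<alpha> u y)^2)"])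
       (auto simp: F1_def fsupp intro!: continuous_intros cu cpu cfS)
  have cF2: "continuous_on UNIV F2"
    by (rule cont_patch[OF S C, where G="\<lambda>y. exp (lam * u y) * (\<Sum>\<alpha>\<in>UNIV. (pd \<alpha> f y)^2)"])
       (auto simp: F2_def pdf0 intro!: continuous_intros cu cpfS)
  have F1_0: "F1 y = 0" if "y \<notin> C" for y using fsupp[OF that] by (simp add: F1_def)
  have F2_0: "F2 y = 0" if "y \<notin> C" for y using pdf0[OF that] by (simp add: F2_def)
  have intF1: "integrable lborel F1" by (rule cs_integrable[OF cF1 C(1) F1_0])
  have intF2: "integrable lborel F2" by (rule cs_integrable[OF cF2 C(1) F2_0])
  have lam0: "lam > 0" using lam by simp
  have pw: "lam / 2 * F1 y - 2 / lam * F2 y \<le> Sig y" for y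
  proof (cases "y \<in> S")
    case False
    then have "y \<notin> C" using C by auto
    then show ?thesis using False by (simp add: Sig_def pdpsi0 F1_def F2_def)
  next
    case True
    let ?E = "exp (lam * u y)"
    let ?a = "\<lambda>\<alpha>. pd \<alpha> u y" and ?b = "\<lambda>\<alpha>. pd \<alpha> (pd \<alpha> u) y" and ?c = "\<lambda>\<alpha>. pd \<alpha> f y"
    have id: "Fa \<alpha> y = ?E * (lam / 2 * (f y)^2 * (?a \<alpha>)^2 - 2 / lam * (?c \<alpha>)^2) + ?E * (f y)^2 * ?b \<alpha>
        + ?E / (2 * lam) * (lam * ?a \<alpha> * f y + 2 * ?c \<alpha>)^2" for \<alpha>
      using lam0 unfolding Fa_def by (simp add: field_simps power2_eq_square)
    have "Sig y = (\<Sum>\<alpha>\<in>UNIV. ?E * (lam / 2 * (f y)^2 * (?a \<alpha>)^2 - 2 / lam * (?c \<alpha>)^2))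
        + ?E * (f y)^2 * (\<Sum>\<alpha>\<in>UNIV. ?b \<alpha>)
        + (\<Sum>\<alpha>\<in>UNIV. ?E / (2 * lam) * (lam * ?a \<alpha> * f y + 2 * ?c \<alpha>)^2)"
      unfolding Sig_def using True by (simp add: pdpsiS id sum.distrib sum_distrib_left)
    also have "(\<Sum>\<alpha>\<in>UNIV. ?b \<alpha>) = 0" using harm[OF True] .
    also have "(\<Sum>\<alpha>\<in>UNIV. ?E * (lam / 2 * (f y)^2 * (?a \<alpha>)^2 - 2 / lam * (?c \<alpha>)^2))
        = lam / 2 * F1 y - 2 / lam * F2 y"
      using True by (simp add: F1_def F2_def sum_distrib_left sum_subtractf algebra_simps)
    finally have "Sig y = lam / 2 * F1 y - 2 / lam * F2 y
        + (\<Sum>\<alpha>\<in>UNIV. ?E / (2 * lam) * (lam * ?a \<alpha> * f y + 2 * ?c \<alpha>)^2)" by simp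
    moreover have "(\<Sum>\<alpha>\<in>UNIV. ?E / (2 * lam) * (lam * ?a \<alpha> * f y + 2 * ?c \<alpha>)^2) \<ge> 0"
      using lam0 by (intro sum_nonneg) simp
    ultimately show ?thesis by simp
  qed
  have "integral\<^sup>L lborel (\<lambda>y. lam / 2 * F1 y - 2 / lam * F2 y) \<le> integral\<^sup>L lborel Sig"
    by (rule integral_mono[OF _ intSig pw]) (simp add: intF1 intF2)
  then have "lam / 2 * integral\<^sup>L lborel F1 - 2 / lam * integral\<^sup>L lborel F2 \<le> 0"
    using intF1 intF2 Sig0 by simp
  moreover have "integral\<^sup>L lborel F2 \<ge> 0"
    by (rule integral_nonneg_AE) (simp add: F2_def sum_nonneg)
  ultimately have le: "integral\<^sup>L lborel F1 \<le> integral\<^sup>L lborel F2"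
  proof -
    assume a: "lam / 2 * integral\<^sup>L lborel F1 - 2 / lam * integral\<^sup>L lborel F2 \<le> 0"
      and b: "integral\<^sup>L lborel F2 \<ge> 0"
    have "lam * lam * integral\<^sup>L lborel F1 \<le> 4 * integral\<^sup>L lborel F2"
      using a lam0 by (simp add: field_simps)
    moreover have "4 * integral\<^sup>L lborel F1 \<le> lam * lam * integral\<^sup>L lborel F1 \<or> integral\<^sup>L lborel F1 \<le> 0"
    proof -
      have "4 \<le> lam * lam" using mult_mono[OF lam lam] lam0 by simp
      then show ?thesis by (cases "integral\<^sup>L lborel F1 \<le> 0") (auto intro: mult_right_mono)
    qed
    ultimately show ?thesis using b by linarith
  qed
  have e1: "(\<integral>\<^sup>+x. ennreal (exp (lam * u x) * (f x)^2 * (\<Sum>\<alpha>\<in>UNIV. (pd \<alpha> u x)^2)) \<partial>lebesgue_on S)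
      = ennreal (integral\<^sup>L lborel F1)"
    by (rule nn_S_lborel[OF S _ _ _ intF1]) (auto simp: F1_def intro!: sum_nonneg mult_nonneg_nonneg)
  have e2: "(\<integral>\<^sup>+x. ennreal (exp (lam * u x) * (\<Sum>\<alpha>\<in>UNIV. (pd \<alpha> f x)^2)) \<partial>lebesgue_on S)
      = ennreal (integral\<^sup>L lborel F2)"
    by (rule nn_S_lborel[OF S _ _ _ intF2]) (auto simp: F2_def intro!: sum_nonneg mult_nonneg_nonneg)
  show ?thesis unfolding e1 e2 using le by (rule ennreal_leI)
qed

lemma evec_app': "evec i k = (if k = i then 1 else 0)" by (simp add: evec_def)

lemma lin_rep:
  fixes L :: "(nat \<Rightarrow> real) \<Rightarrow> real"
  assumes add: "\<And>\<xi> \<eta>. L (\<lambda>k. \<xi> k + \<eta> k) = L \<xi> + L \<eta>"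
    and hom: "\<And>r \<xi>. L (\<lambda>k. r * \<xi> k) = r * L \<xi>"
    and reads: "\<And>\<xi> \<xi>'. (\<And>k. k \<in> A \<Longrightarrow> \<xi> k = \<xi>' k) \<Longrightarrow> L \<xi> = L \<xi>'"
    and A: "finite A"
  shows "L \<xi> = (\<Sum>i\<in>A. L (evec i) * \<xi> i)"
proof -
  have gen: "L (\<lambda>k. \<Sum>i\<in>B. \<xi> i * evec i k) = (\<Sum>i\<in>B. L (evec i) * \<xi> i)" if "finite B" for B
    using that
  proof (induction B rule: finite_induct)
    case empty
    have "L (\<lambda>k. 0 * \<xi> k) = 0 * L \<xi>" by (rule hom)
    then show ?case by simp
  next
    case (insert i B)
    have "L (\<lambda>k. \<Sum>i\<in>insert i B. \<xi> i * evec i k) = L (\<lambda>k. \<xi> i * evec i k + (\<Sum>i\<in>B. \<xi> i * evec i k))"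
      using insert by simp
    also have "\<dots> = \<xi> i * L (evec i) + L (\<lambda>k. \<Sum>i\<in>B. \<xi> i * evec i k)"
      by (simp add: add hom)
    finally show ?case using insert by (simp add: mult.commute)
  qed
  have "L \<xi> = L (\<lambda>k. \<Sum>i\<in>A. \<xi> i * evec i k)"
  proof (rule reads)
    fix k assume k: "k \<in> A"
    have "(\<Sum>i\<in>A. \<xi> i * evec i k) = (\<Sum>i\<in>A. if i = k then \<xi> k else 0)"
      by (rule sum.cong) (auto simp: evec_app')
    then show "\<xi> k = (\<Sum>i\<in>A. \<xi> i * evec i k)" using k A by simp
  qed
  then show ?thesis using gen[OF A] by simp
qed

lemma thetaC_add: "thetaC l p (\<lambda>k. \<xi> k + \<eta> k) = thetaC l p \<xi> + thetaC l p \<eta>"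
proof -
  have "(\<Sum>k = 1..l - 1. p (2 * k) * (\<xi> (2 * k + 1) + \<eta> (2 * k + 1)) - p (2 * k + 1) * (\<xi> (2 * k) + \<eta> (2 * k)))
    = (\<Sum>k = 1..l - 1. (p (2 * k) * \<xi> (2 * k + 1) - p (2 * k + 1) * \<xi> (2 * k)) + (p (2 * k) * \<eta> (2 * k + 1) - p (2 * k + 1) * \<eta> (2 * k)))"
    by (rule sum.cong) (simp_all add: algebra_simps)
  then show ?thesis unfolding thetaC_def sum.distrib by simp
qed

lemma thetaC_hom: "thetaC l p (\<lambda>k. r * \<xi> k) = r * thetaC l p \<xi>"
proof -
  have "(\<Sum>k = 1..l - 1. p (2 * k) * (r * \<xi> (2 * k + 1)) - p (2 * k + 1) * (r * \<xi> (2 * k)))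
    = (\<Sum>k = 1..l - 1. r * (p (2 * k) * \<xi> (2 * k + 1) - p (2 * k + 1) * \<xi> (2 * k)))"
    by (rule sum.cong) (simp_all add: algebra_simps)
  then show ?thesis unfolding thetaC_def sum_distrib_left[symmetric] by (simp add: algebra_simps)
qed

lemma thetaH_add: "thetaH l r p (\<lambda>k. \<xi> k + \<eta> k) = thetaH l r p \<xi> + thetaH l r p \<eta>"
proof -
  let ?F = "\<lambda>\<xi> k. p (4*k) * \<xi> (4*k + cyc r 1) - p (4*k + cyc r 1) * \<xi> (4*k)
     - p (4*k + cyc r 2) * \<xi> (4*k + cyc r 3) + p (4*k + cyc r 3) * \<xi> (4*k + cyc r 2)"
  have "(\<Sum>k = 1..l - 1. ?F (\<lambda>k. \<xi> k + \<eta> k) k) = (\<Sum>k = 1..l - 1. ?F \<xi> k + ?F \<eta> k)"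
    by (rule sum.cong) (simp_all add: algebra_simps)
  then show ?thesis unfolding thetaH_def sum.distrib by simp
qed

lemma thetaH_hom: "thetaH l r p (\<lambda>k. s * \<xi> k) = s * thetaH l r p \<xi>"
proof -
  let ?F = "\<lambda>\<xi> k. p (4*k) * \<xi> (4*k + cyc r 1) - p (4*k + cyc r 1) * \<xi> (4*k)
     - p (4*k + cyc r 2) * \<xi> (4*k + cyc r 3) + p (4*k + cyc r 3) * \<xi> (4*k + cyc r 2)"
  have "(\<Sum>k = 1..l - 1. ?F (\<lambda>k. s * \<xi> k) k) = (\<Sum>k = 1..l - 1. s * ?F \<xi> k)"
    by (rule sum.cong) (simp_all add: algebra_simps)
  then show ?thesis unfolding thetaH_def sum_distrib_left[symmetric] by (simp add: algebra_simps)
qed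

lemma thetaC_lin: "l \<ge> 1 \<Longrightarrow> thetaC l p \<xi> = (\<Sum>i\<in>{1..2*l-1}. thetaC l p (evec i) * \<xi> i)"
proof (rule lin_rep[OF thetaC_add thetaC_hom])
  assume True: "l \<ge> 1"
  show "thetaC l p \<xi> = thetaC l p \<xi>'" if H: "\<And>k. k \<in> {1..2*l-1} \<Longrightarrow> \<xi> k = \<xi>' k" for \<xi> \<xi>'
  proof -
    have "\<xi> 1 = \<xi>' 1" using True H by simp
    moreover have "(\<Sum>k = 1..l - 1. p (2 * k) * \<xi> (2 * k + 1) - p (2 * k + 1) * \<xi> (2 * k))
        = (\<Sum>k = 1..l - 1. p (2 * k) * \<xi>' (2 * k + 1) - p (2 * k + 1) * \<xi>' (2 * k))"
      by (rule sum.cong) (auto simp: H)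
    ultimately show ?thesis unfolding thetaC_def by simp
  qed
qed simp

lemma cyc_range: "cyc r i \<in> {1..3}" unfolding cyc_def by auto

lemma thetaH_lin: "l \<ge> 1 \<Longrightarrow> thetaH l r p \<xi> = (\<Sum>i\<in>{1..4*l-1}. thetaH l r p (evec i) * \<xi> i)"
proof (rule lin_rep[OF thetaH_add thetaH_hom])
  assume l: "l \<ge> 1"
  show "thetaH l r p \<xi> = thetaH l r p \<xi>'" if H: "\<And>k. k \<in> {1..4*l-1} \<Longrightarrow> \<xi> k = \<xi>' k" for \<xi> \<xi>'
  proof -
    have c: "cyc r j \<ge> 1" "cyc r j \<le> 3" for j using cyc_range[of r j] by auto
    have "\<xi> (cyc r 1) = \<xi>' (cyc r 1)" using l H c[of 1] by simp
    moreover have "(\<Sum>k = 1..l - 1. p (4*k) * \<xi> (4*k + cyc r 1) - p (4*k + cyc r 1) * \<xi> (4*k)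
     - p (4*k + cyc r 2) * \<xi> (4*k + cyc r 3) + p (4*k + cyc r 3) * \<xi> (4*k + cyc r 2))
      = (\<Sum>k = 1..l - 1. p (4*k) * \<xi>' (4*k + cyc r 1) - p (4*k + cyc r 1) * \<xi>' (4*k)
     - p (4*k + cyc r 2) * \<xi>' (4*k + cyc r 3) + p (4*k + cyc r 3) * \<xi>' (4*k + cyc r 2))"
    proof (rule sum.cong)
      fix k assume k: "k \<in> {1..l-1}"
      have "4*k + cyc r j \<in> {1..4*l-1}" for j using k c[of j] by auto
      moreover have "4*k \<in> {1..4*l-1}" using k by auto
      ultimately show "p (4*k) * \<xi> (4*k + cyc r 1) - p (4*k + cyc r 1) * \<xi> (4*k)
     - p (4*k + cyc r 2) * \<xi> (4*k + cyc r 3) + p (4*k + cyc r 3) * \<xi> (4*k + cyc r 2)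
      = p (4*k) * \<xi>' (4*k + cyc r 1) - p (4*k + cyc r 1) * \<xi>' (4*k)
     - p (4*k + cyc r 2) * \<xi>' (4*k + cyc r 3) + p (4*k + cyc r 3) * \<xi>' (4*k + cyc r 2)"
        using H by metis
    qed simp
    ultimately show ?thesis unfolding thetaH_def by simp
  qed
qed simp

definition qlam :: "field \<Rightarrow> nat \<Rightarrow> real" where
  "qlam K j = (if j < dimK K then 4 else 2)"

definition qa :: "field \<Rightarrow> nat \<Rightarrow> (nat \<Rightarrow> real) \<Rightarrow> nat \<Rightarrow> nat \<Rightarrow> real" where
  "qa K l c j i = (if j < dimK K then (case K of CC \<Rightarrow> thetaC l (gam c 0) (evec i)
       | HH \<Rightarrow> thetaH l j (gam c 0) (evec i) | RR \<Rightarrow> 0) else evec j i)"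

lemma qlam_ge: "qlam K j \<ge> 2" unfolding qlam_def by simp

lemma thetaC_gam: "thetaC l (gam c t) \<xi> = thetaC l (gam c 0) \<xi>"
  unfolding thetaC_def gam_def by (intro arg_cong[where f="\<lambda>x. \<xi> 1 + x"] sum.cong) auto

lemma thetaH_gam: "thetaH l r (gam c t) \<xi> = thetaH l r (gam c 0) \<xi>"
proof -
  have c: "cyc r j \<ge> 1" for j using cyc_range[of r j] by auto
  show ?thesis unfolding thetaH_def gam_def
    by (intro arg_cong[where f="\<lambda>x. \<xi> (cyc r 1) + x"] sum.cong) (use c in auto)
qed

lemma sum_evec_z: "j \<in> A \<Longrightarrow> finite A \<Longrightarrow> (\<Sum>i\<in>A. evec j i * \<zeta> i) = \<zeta> j"
proof -
  assume j: "j \<in> A" and A: "finite A"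
  have "(\<Sum>i\<in>A. evec j i * \<zeta> i) = (\<Sum>i\<in>A. if i = j then \<zeta> j else 0)"
    by (rule sum.cong) (auto simp: evec_app')
  then show ?thesis using j A by simp
qed

lemma sum_upd0: "(\<Sum>i\<in>{Suc n..m}. g i * (\<zeta>(0 := 0)) i) = (\<Sum>i\<in>{Suc n..m}. g i * \<zeta> i)"
  by (rule sum.cong) auto

lemma sq_sum_eq: "(\<Sum>k\<in>A. (\<zeta>(0 := 0)) k * (\<zeta>(0 := 0)) k) = (\<Sum>j\<in>A. (\<zeta> j)^2)" if "0 \<notin> A" for \<zeta> :: "nat \<Rightarrow> real"
  by (rule sum.cong) (use that in \<open>auto simp: power2_eq_square\<close>)

lemma Qf_rep:
  assumes l: "l \<ge> 2"
  shows "Qf K l (gam c t) \<zeta> = (\<Sum>j\<in>{1..mdim K l - 1}. exp (qlam K j * t) * (\<Sum>i\<in>{1..mdim K l - 1}. qa K l c j i * \<zeta> i)^2)"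
proof (cases K)
  case RR
  have e1: "(\<Sum>j\<in>{1..l - 1}. exp (qlam K j * t) * (\<Sum>i\<in>{1..l - 1}. qa K l c j i * \<zeta> i)^2)
      = (\<Sum>j\<in>{1..l - 1}. exp (2 * t) * (\<zeta> j)^2)"
    by (rule sum.cong) (auto simp: RR qlam_def qa_def sum_evec_z)
  have e3: "Qf K l (gam c t) \<zeta> = exp (2 * t) * (\<Sum>k = 1..l - 1. (\<zeta>(0 := 0)) k * (\<zeta>(0 := 0)) k)"
    unfolding Qf_def RR gmet.simps by (simp add: gam_def)
  have e4: "mdim K l = l" by (simp add: RR mdim_def)
  show ?thesis unfolding e3 e4 e1 by (simp add: sum_distrib_left power2_eq_square)
next
  case CC
  let ?A = "{1..2*l-1}"
  have th: "thetaC l (gam c t) (\<zeta>(0 := 0)) = (\<Sum>i\<in>?A. thetaC l (gam c 0) (evec i) * \<zeta> i)"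
  proof -
    have "thetaC l (gam c t) (\<zeta>(0 := 0)) = thetaC l (gam c 0) (\<zeta>(0 := 0))" by (rule thetaC_gam)
    also have "\<dots> = (\<Sum>i\<in>?A. thetaC l (gam c 0) (evec i) * (\<zeta>(0 := 0)) i)"
      using l by (intro thetaC_lin) simp
    also have "\<dots> = (\<Sum>i\<in>?A. thetaC l (gam c 0) (evec i) * \<zeta> i)"
      by (rule sum.cong) auto
    finally show ?thesis .
  qed
  let ?G = "\<lambda>j. exp (qlam K j * t) * (\<Sum>i\<in>?A. qa K l c j i * \<zeta> i)^2"
  have s1: "sum ?G ?A = ?G 1 + sum ?G {2..2*l-1}"
    using sum.atLeast_Suc_atMost[of 1 "2*l-1" ?G] l by (simp add: numeral_2_eq_2)
  have g1: "?G 1 = exp (4 * t) * (\<Sum>i\<in>?A. thetaC l (gam c 0) (evec i) * \<zeta> i)^2"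
    by (simp add: CC qlam_def qa_def)
  have g2: "sum ?G {2..2*l-1} = (\<Sum>j\<in>{2..2*l-1}. exp (2 * t) * (\<zeta> j)^2)"
    by (rule sum.cong) (auto simp: CC qlam_def qa_def sum_evec_z)
  have e3: "Qf K l (gam c t) \<zeta> = exp (4 * t) * (thetaC l (gam c t) (\<zeta>(0 := 0)))^2
      + exp (2 * t) * (\<Sum>k = 2..2*l - 1. (\<zeta>(0 := 0)) k * (\<zeta>(0 := 0)) k)"
    unfolding Qf_def CC gmet.simps by (simp add: gam_def power2_eq_square)
  have e4: "mdim K l = 2 * l" by (simp add: CC mdim_def)
  show ?thesis unfolding e4 s1 g1 g2 e3 th by (simp add: sum_distrib_left power2_eq_square)
next
  case HH
  let ?A = "{1..4*l-1}"
  have th: "thetaH l r (gam c t) (\<zeta>(0 := 0)) = (\<Sum>i\<in>?A. thetaH l r (gam c 0) (evec i) * \<zeta> i)" for r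
  proof -
    have "thetaH l r (gam c t) (\<zeta>(0 := 0)) = thetaH l r (gam c 0) (\<zeta>(0 := 0))" by (rule thetaH_gam)
    also have "\<dots> = (\<Sum>i\<in>?A. thetaH l r (gam c 0) (evec i) * (\<zeta>(0 := 0)) i)"
      using l by (intro thetaH_lin) simp
    also have "\<dots> = (\<Sum>i\<in>?A. thetaH l r (gam c 0) (evec i) * \<zeta> i)"
      by (rule sum.cong) auto
    finally show ?thesis .
  qed
  let ?G = "\<lambda>j. exp (qlam K j * t) * (\<Sum>i\<in>?A. qa K l c j i * \<zeta> i)^2"
  have s1: "sum ?G ?A = sum ?G {1..3} + sum ?G {4..4*l-1}"
  proof -
    have "?A = {1..3} \<union> {4..4*l-1}" using l by auto
    then have "sum ?G ?A = sum ?G ({1..3} \<union> {4..4*l-1})" by simp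
    also have "\<dots> = sum ?G {1..3} + sum ?G {4..4*l-1}" by (rule sum.union_disjoint) auto
    finally show ?thesis .
  qed
  have g1: "sum ?G {1..3} = (\<Sum>j\<in>{1..3}. exp (4 * t) * (thetaH l j (gam c t) (\<zeta>(0 := 0)))^2)"
    by (rule sum.cong) (auto simp: HH qlam_def qa_def th)
  have g2: "sum ?G {4..4*l-1} = (\<Sum>j\<in>{4..4*l-1}. exp (2 * t) * (\<zeta> j)^2)"
    by (rule sum.cong) (auto simp: HH qlam_def qa_def sum_evec_z)
  have e3: "Qf K l (gam c t) \<zeta> = exp (4 * t) * (\<Sum>r=1..3. (thetaH l r (gam c t) (\<zeta>(0 := 0)))^2)
      + exp (2 * t) * (\<Sum>k = 4..4*l - 1. (\<zeta>(0 := 0)) k * (\<zeta>(0 := 0)) k)"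
    unfolding Qf_def HH gmet.simps by (simp add: gam_def power2_eq_square)
  have e4: "mdim K l = 4 * l" by (simp add: HH mdim_def)
  show ?thesis unfolding e4 s1 g1 g2 e3 by (simp add: sum_distrib_left power2_eq_square)
qed

lemma cont_meas_S:
  fixes g :: "real^'n::finite \<Rightarrow> real"
  assumes "open S" "continuous_on S g"
  shows "(\<lambda>x. ennreal (g x)) \<in> borel_measurable (lebesgue_on S)"
proof -
  have "g \<in> borel_measurable (lebesgue_on S)"
    using assms by (intro continuous_imp_measurable_on_sets_lebesgue) auto
  then show ?thesis by measurable
qed

lemma Cinf_C1:
  assumes "Cinf UNIV g"
  shows "\<And>x i. (\<lambda>t. g (x + t *\<^sub>R axis i 1)) differentiable (at 0)"
    and "continuous_on UNIV g" and "\<And>i. continuous_on UNIV (pd i g)"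
proof -
  have "Ck (Suc 0) UNIV g" using assms unfolding Cinf_def by blast
  then show "\<And>x i. (\<lambda>t. g (x + t *\<^sub>R axis i 1)) differentiable (at 0)"
    and "continuous_on UNIV g" and "\<And>i. continuous_on UNIV (pd i g)" by auto
qed

lemma star:
  fixes u0 :: "real^'n::finite \<Rightarrow> real" and w :: "real^'n \<Rightarrow> nat \<Rightarrow> real"
  assumes l: "l \<ge> 2" and S: "open S" and C: "compact C" "C \<subseteq> S"
    and u1: "\<And>x i. x \<in> S \<Longrightarrow> (\<lambda>t. u0 (x + t *\<^sub>R axis i 1)) differentiable (at 0)"
    and u2: "\<And>x i j. x \<in> S \<Longrightarrow> (\<lambda>t. pd i u0 (x + t *\<^sub>R axis j 1)) differentiable (at 0)"
    and cu: "continuous_on S u0" and cpu: "\<And>i. continuous_on S (pd i u0)"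
    and cppu: "\<And>i j. continuous_on S (pd j (pd i u0))"
    and harm: "\<And>x. x \<in> S \<Longrightarrow> (\<Sum>\<alpha>\<in>UNIV. pd \<alpha> (pd \<alpha> u0) x) = 0"
    and w1: "\<And>k. Cinf UNIV (\<lambda>x. w x k)" and wsupp: "\<And>x. x \<notin> C \<Longrightarrow> w x = (\<lambda>k. 0)"
  shows "(\<integral>\<^sup>+x. ennreal (Qf K l (gam c (u0 x)) (w x) * (\<Sum>\<alpha>\<in>UNIV. (pd \<alpha> u0 x)^2)) \<partial>lebesgue_on S)
    \<le> (\<integral>\<^sup>+x. ennreal (\<Sum>\<alpha>\<in>UNIV. Qf K l (gam c (u0 x)) (\<lambda>k. pd \<alpha> (\<lambda>z. w z k) x)) \<partial>lebesgue_on S)"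
proof -
  let ?A = "{1..mdim K l - 1}"
  let ?N = "\<lambda>x. \<Sum>\<alpha>\<in>UNIV. (pd \<alpha> u0 x)^2"
  define f where "f j x = (\<Sum>i\<in>?A. qa K l c j i * w x i)" for j x
  have wd: "\<And>x i. (\<lambda>t. w (x + t *\<^sub>R axis i 1) k) differentiable (at 0)"
    and wc: "continuous_on UNIV (\<lambda>x. w x k)" and wpc: "\<And>i. continuous_on UNIV (pd i (\<lambda>x. w x k))" for k
    using Cinf_C1[OF w1[of k]] by auto
  have df: "((\<lambda>t. f j (x + t *\<^sub>R axis \<alpha> 1)) has_real_derivative (\<Sum>i\<in>?A. qa K l c j i * pd \<alpha> (\<lambda>z. w z i) x)) (at 0)"
    for j x \<alpha>
    unfolding f_def
    by (intro DERIV_sum DERIV_cmult line_DERIV[of "\<lambda>z. w z _", OF wd])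
  have pdf: "pd \<alpha> (f j) x = (\<Sum>i\<in>?A. qa K l c j i * pd \<alpha> (\<lambda>z. w z i) x)" for j x \<alpha>
    by (rule pd_eqI[OF df])
  have f1: "(\<lambda>t. f j (x + t *\<^sub>R axis \<alpha> 1)) differentiable (at 0)" for j x \<alpha>
    using df real_differentiable_def by blast
  have cf: "continuous_on UNIV (f j)" for j
    unfolding f_def[abs_def] by (intro continuous_intros wc)
  have cpf: "continuous_on UNIV (pd \<alpha> (f j))" for j \<alpha>
    unfolding pdf[abs_def] by (intro continuous_intros wpc)
  have fsupp: "f j x = 0" if "x \<notin> C" for j x
    using wsupp[OF that] by (simp add: f_def)
  have SS: "(\<integral>\<^sup>+x. ennreal (exp (qlam K j * u0 x) * (f j x)^2 * ?N x) \<partial>lebesgue_on S)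
       \<le> (\<integral>\<^sup>+x. ennreal (exp (qlam K j * u0 x) * (\<Sum>\<alpha>\<in>UNIV. (pd \<alpha> (f j) x)^2)) \<partial>lebesgue_on S)" for j
    by (rule smooth_scalar[OF S C u1 u2 cu cpu cppu harm f1 cf cpf fsupp qlam_ge])
  have cfS: "continuous_on S (f j)" for j using cf continuous_on_subset by blast
  have cpfS: "continuous_on S (pd \<alpha> (f j))" for j \<alpha> using cpf continuous_on_subset by blast
  have m1: "(\<lambda>x. ennreal (exp (qlam K j * u0 x) * (f j x)^2 * ?N x)) \<in> borel_measurable (lebesgue_on S)" for j
    by (intro cont_meas_S S continuous_intros cu cpu cfS)
  have m2: "(\<lambda>x. ennreal (exp (qlam K j * u0 x) * (\<Sum>\<alpha>\<in>UNIV. (pd \<alpha> (f j) x)^2))) \<in> borel_measurable (lebesgue_on S)" for j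
    by (intro cont_meas_S S continuous_intros cu cpfS)
  have L: "ennreal (Qf K l (gam c (u0 x)) (w x) * ?N x) = (\<Sum>j\<in>?A. ennreal (exp (qlam K j * u0 x) * (f j x)^2 * ?N x))" for x
  proof -
    have "Qf K l (gam c (u0 x)) (w x) * ?N x = (\<Sum>j\<in>?A. exp (qlam K j * u0 x) * (f j x)^2 * ?N x)"
      unfolding Qf_rep[OF l] f_def by (simp add: sum_distrib_right)
    moreover have "0 \<le> exp (qlam K j * u0 x) * (f j x)^2 * ?N x" for j
      by (intro mult_nonneg_nonneg sum_nonneg) auto
    ultimately show ?thesis by simp
  qed
  have R: "ennreal (\<Sum>\<alpha>\<in>UNIV. Qf K l (gam c (u0 x)) (\<lambda>k. pd \<alpha> (\<lambda>z. w z k) x))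
      = (\<Sum>j\<in>?A. ennreal (exp (qlam K j * u0 x) * (\<Sum>\<alpha>\<in>UNIV. (pd \<alpha> (f j) x)^2)))" for x
  proof -
    have "(\<Sum>\<alpha>\<in>UNIV. Qf K l (gam c (u0 x)) (\<lambda>k. pd \<alpha> (\<lambda>z. w z k) x))
        = (\<Sum>j\<in>?A. exp (qlam K j * u0 x) * (\<Sum>\<alpha>\<in>UNIV. (pd \<alpha> (f j) x)^2))"
      unfolding Qf_rep[OF l] pdf by (simp add: sum_distrib_left sum.swap[of _ UNIV])
    moreover have "0 \<le> exp (qlam K j * u0 x) * (\<Sum>\<alpha>\<in>UNIV. (pd \<alpha> (f j) x)^2)" for j
      by (intro mult_nonneg_nonneg sum_nonneg) auto
    ultimately show ?thesis by simp
  qed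
  have "(\<integral>\<^sup>+x. ennreal (Qf K l (gam c (u0 x)) (w x) * ?N x) \<partial>lebesgue_on S)
      = (\<Sum>j\<in>?A. (\<integral>\<^sup>+x. ennreal (exp (qlam K j * u0 x) * (f j x)^2 * ?N x) \<partial>lebesgue_on S))"
    unfolding L by (rule nn_integral_sum) (rule m1)
  also have "\<dots> \<le> (\<Sum>j\<in>?A. (\<integral>\<^sup>+x. ennreal (exp (qlam K j * u0 x) * (\<Sum>\<alpha>\<in>UNIV. (pd \<alpha> (f j) x)^2)) \<partial>lebesgue_on S))"
    by (rule sum_mono) (rule SS)
  also have "\<dots> = (\<integral>\<^sup>+x. ennreal (\<Sum>\<alpha>\<in>UNIV. Qf K l (gam c (u0 x)) (\<lambda>k. pd \<alpha> (\<lambda>z. w z k) x)) \<partial>lebesgue_on S)"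
    unfolding R by (rule nn_integral_sum[symmetric]) (rule m2)
  finally show ?thesis .
qed

lemma sq_split:
  fixes x y e :: real
  assumes e: "e > 0"
  shows "(x + y)^2 \<le> (1 + e) * x^2 + (1 + 1/e) * y^2"
proof -
  have "0 \<le> (e * x - y)^2 / e" using e by simp
  also have "(e * x - y)^2 / e = (1 + e) * x^2 + (1 + 1/e) * y^2 - (x + y)^2"
    using e by (simp add: field_simps power2_eq_square)
  finally show ?thesis by simp
qed

lemma Q_split:
  assumes l: "l \<ge> 2" and e: "e > 0"
  shows "Qf K l (gam c t) a \<le> (1 + e) * Qf K l (gam c t) b + (1 + 1/e) * Qf K l (gam c t) (\<lambda>k. a k - b k)"
proof -
  let ?A = "{1..mdim K l - 1}"
  let ?L = "\<lambda>j z. \<Sum>i\<in>?A. qa K l c j i * z i"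
  have lin: "?L j a = ?L j b + ?L j (\<lambda>k. a k - b k)" for j
    by (simp add: sum_subtractf right_diff_distrib)
  have "Qf K l (gam c t) a = (\<Sum>j\<in>?A. exp (qlam K j * t) * (?L j b + ?L j (\<lambda>k. a k - b k))^2)"
    unfolding Qf_rep[OF l] lin ..
  also have "\<dots> \<le> (\<Sum>j\<in>?A. exp (qlam K j * t) * ((1 + e) * (?L j b)^2 + (1 + 1/e) * (?L j (\<lambda>k. a k - b k))^2))"
    by (intro sum_mono mult_left_mono sq_split e) simp
  also have "\<dots> = (1 + e) * Qf K l (gam c t) b + (1 + 1/e) * Qf K l (gam c t) (\<lambda>k. a k - b k)"
    unfolding Qf_rep[OF l] by (simp add: sum_distrib_left sum.distrib algebra_simps)
  finally show ?thesis .
qed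

definition Dq :: "field \<Rightarrow> nat \<Rightarrow> (nat \<Rightarrow> real) \<Rightarrow> real \<Rightarrow> real" where
  "Dq K l c t = (\<Sum>j\<in>{1..mdim K l - 1}. exp (qlam K j * t) * (\<Sum>i\<in>{1..mdim K l - 1}. (qa K l c j i)^2))"

lemma Q_bound:
  assumes l: "l \<ge> 2"
  shows "Qf K l (gam c t) z \<le> Dq K l c t * sqn K l z"
proof -
  let ?A = "{1..mdim K l - 1}"
  have "Qf K l (gam c t) z \<le> (\<Sum>j\<in>?A. exp (qlam K j * t) * ((\<Sum>i\<in>?A. (qa K l c j i)^2) * (\<Sum>i\<in>?A. (z i)^2)))"
    unfolding Qf_rep[OF l] by (intro sum_mono mult_left_mono Cauchy_Schwarz_ineq_sum) simp
  also have "\<dots> = Dq K l c t * sqn K l z"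
    unfolding Dq_def sqn_def by (simp add: sum_distrib_right mult.assoc)
  finally show ?thesis .
qed

lemma Q_nonneg:
  assumes l: "l \<ge> 2"
  shows "Qf K l (gam c t) z \<ge> 0"
  unfolding Qf_rep[OF l] by (intro sum_nonneg mult_nonneg_nonneg) auto

lemma sqn_nonneg: "sqn K l z \<ge> 0" unfolding sqn_def by (intro sum_nonneg) auto

lemma sqn_swap: "sqn K l (\<lambda>k. a k - b k) = sqn K l (\<lambda>k. b k - a k)"
  unfolding sqn_def by (intro sum.cong) (auto simp: power2_commute)

lemma Q_meas:
  assumes l: "l \<ge> 2" and t[measurable]: "t \<in> borel_measurable M"
    and z[measurable]: "\<And>k. (\<lambda>x. z x k) \<in> borel_measurable M"
  shows "(\<lambda>x. Qf K l (gam c (t x)) (z x)) \<in> borel_measurable M"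
  unfolding Qf_rep[OF l] by measurable

lemma sqn_meas:
  assumes z[measurable]: "\<And>k. (\<lambda>x. z x k) \<in> borel_measurable M"
  shows "(\<lambda>x. sqn K l (z x)) \<in> borel_measurable M"
  unfolding sqn_def by measurable

lemma nn_lin:
  assumes f[measurable]: "f \<in> borel_measurable M" and g[measurable]: "g \<in> borel_measurable M"
    and fn: "\<And>x. f x \<ge> 0" and gn: "\<And>x. g x \<ge> 0" and a: "a \<ge> 0" and b: "b \<ge> 0"
  shows "(\<integral>\<^sup>+x. ennreal (a * f x + b * g x) \<partial>M) = ennreal a * (\<integral>\<^sup>+x. ennreal (f x) \<partial>M) + ennreal b * (\<integral>\<^sup>+x. ennreal (g x) \<partial>M)"
proof -
  have "(\<integral>\<^sup>+x. ennreal (a * f x + b * g x) \<partial>M) = (\<integral>\<^sup>+x. ennreal a * ennreal (f x) + ennreal b * ennreal (g x) \<partial>M)"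
    using fn gn a b by (intro nn_integral_cong) (simp add: ennreal_plus ennreal_mult)
  also have "\<dots> = (\<integral>\<^sup>+x. ennreal a * ennreal (f x) \<partial>M) + (\<integral>\<^sup>+x. ennreal b * ennreal (g x) \<partial>M)"
    by (rule nn_integral_add) measurable
  also have "\<dots> = ennreal a * (\<integral>\<^sup>+x. ennreal (f x) \<partial>M) + ennreal b * (\<integral>\<^sup>+x. ennreal (g x) \<partial>M)"
    by (simp add: nn_integral_cmult)
  finally show ?thesis .
qed

lemma approx_step:
  fixes u0 :: "real^'n::finite \<Rightarrow> real" and v w :: "real^'n \<Rightarrow> nat \<Rightarrow> real"
    and G :: "real^'n \<Rightarrow> 'n \<Rightarrow> nat \<Rightarrow> real" and M e :: real
  assumes l: "l \<ge> 2" and S: "open S"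
    and u1: "\<And>x i. x \<in> S \<Longrightarrow> (\<lambda>t. u0 (x + t *\<^sub>R axis i 1)) differentiable (at 0)"
    and u2: "\<And>x i j. x \<in> S \<Longrightarrow> (\<lambda>t. pd i u0 (x + t *\<^sub>R axis j 1)) differentiable (at 0)"
    and cu: "continuous_on S u0" and cpu: "\<And>i. continuous_on S (pd i u0)"
    and cppu: "\<And>i j. continuous_on S (pd j (pd i u0))"
    and harm: "\<And>x. x \<in> S \<Longrightarrow> (\<Sum>\<alpha>\<in>UNIV. pd \<alpha> (pd \<alpha> u0) x) = 0"
    and vm: "\<And>k. (\<lambda>x. v x k) \<in> borel_measurable (lebesgue_on S)"
    and Gm: "\<And>\<alpha> k. (\<lambda>x. G x \<alpha> k) \<in> borel_measurable (lebesgue_on S)"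
    and wC: "Cc_inf K l S w" and e: "e > 0" and M: "M \<ge> 0"
  shows "(\<integral>\<^sup>+x. ennreal (if (\<Sum>\<alpha>\<in>UNIV. (pd \<alpha> u0 x)^2) * Dq K l c (u0 x) \<le> M
            then Qf K l (gam c (u0 x)) (v x) * (\<Sum>\<alpha>\<in>UNIV. (pd \<alpha> u0 x)^2) else 0) \<partial>lebesgue_on S)
    \<le> ennreal (1+e) * (ennreal (1+e) * (\<integral>\<^sup>+x. ennreal (Qgrad K l (\<lambda>x. gam c (u0 x)) G x) \<partial>lebesgue_on S)
        + ennreal (1+1/e) * (\<integral>\<^sup>+x. ennreal (Qgrad K l (\<lambda>x. gam c (u0 x)) (\<lambda>y \<alpha> k. pd \<alpha> (\<lambda>z. w z k) y - G y \<alpha> k) x) \<partial>lebesgue_on S))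
      + ennreal ((1+1/e) * M) * (\<integral>\<^sup>+x. ennreal (sqn K l (\<lambda>k. w x k - v x k)) \<partial>lebesgue_on S)"
proof -
  let ?N = "\<lambda>x. \<Sum>\<alpha>\<in>UNIV. (pd \<alpha> u0 x)^2"
  let ?Q = "\<lambda>x z. Qf K l (gam c (u0 x)) z"
  let ?L = "lebesgue_on S"
  obtain C where C: "compact C" "C \<subseteq> S" and wsupp: "\<And>x. x \<notin> C \<Longrightarrow> w x = (\<lambda>k. 0)"
    and w1: "\<And>k. Cinf UNIV (\<lambda>x. w x k)"
    using wC unfolding Cc_inf_def by blast
  have Sl: "S \<in> sets lebesgue" using S by simp
  have mu[measurable]: "u0 \<in> borel_measurable ?L"
    by (rule continuous_imp_measurable_on_sets_lebesgue[OF cu Sl])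
  have mpu[measurable]: "pd i u0 \<in> borel_measurable ?L" for i
    by (rule continuous_imp_measurable_on_sets_lebesgue[OF cpu Sl])
  have mw[measurable]: "(\<lambda>x. w x k) \<in> borel_measurable ?L" for k
    using Cinf_C1(2)[OF w1[of k]] by (intro continuous_imp_measurable_on_sets_lebesgue[OF _ Sl]) (rule continuous_on_subset, auto)
  have mpw[measurable]: "(\<lambda>x. pd \<alpha> (\<lambda>z. w z k) x) \<in> borel_measurable ?L" for \<alpha> k
    using Cinf_C1(3)[OF w1[of k]] by (intro continuous_imp_measurable_on_sets_lebesgue[OF _ Sl]) (rule continuous_on_subset, auto)
  have [measurable]: "(\<lambda>x. v x k) \<in> borel_measurable ?L" for k by (rule vm)
  have [measurable]: "(\<lambda>x. G x \<alpha> k) \<in> borel_measurable ?L" for \<alpha> k by (rule Gm)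
  have mQw[measurable]: "(\<lambda>x. ?Q x (w x)) \<in> borel_measurable ?L"
    by (rule Q_meas[OF l]) measurable
  have mQv[measurable]: "(\<lambda>x. ?Q x (v x)) \<in> borel_measurable ?L"
    by (rule Q_meas[OF l]) measurable
  have mQG[measurable]: "(\<lambda>x. ?Q x (G x \<alpha>)) \<in> borel_measurable ?L" for \<alpha>
    by (rule Q_meas[OF l]) measurable
  have mQd[measurable]: "(\<lambda>x. ?Q x (\<lambda>k. pd \<alpha> (\<lambda>z. w z k) x - G x \<alpha> k)) \<in> borel_measurable ?L" for \<alpha>
    by (rule Q_meas[OF l]) measurable
  have msq[measurable]: "(\<lambda>x. sqn K l (\<lambda>k. w x k - v x k)) \<in> borel_measurable ?L"
    by (rule sqn_meas) measurable
  have Nn: "?N x \<ge> 0" for x by (intro sum_nonneg) auto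
  have e1: "1 + e \<ge> 0" "1 + 1/e \<ge> 0" using e by auto
  have "(\<integral>\<^sup>+x. ennreal (if ?N x * Dq K l c (u0 x) \<le> M then ?Q x (v x) * ?N x else 0) \<partial>?L)
      \<le> (\<integral>\<^sup>+x. ennreal ((1+e) * (?Q x (w x) * ?N x) + ((1+1/e) * M) * sqn K l (\<lambda>k. w x k - v x k)) \<partial>?L)"
  proof (rule nn_integral_mono, rule ennreal_leI)
    fix x
    have sp: "?Q x (v x) \<le> (1+e) * ?Q x (w x) + (1+1/e) * ?Q x (\<lambda>k. v x k - w x k)"
      by (rule Q_split[OF l e])
    have bd: "?Q x (\<lambda>k. v x k - w x k) \<le> Dq K l c (u0 x) * sqn K l (\<lambda>k. w x k - v x k)"
      using Q_bound[OF l, where K=K and c=c and t="u0 x" and z="\<lambda>k. v x k - w x k"] sqn_swap[of K l "v x" "w x"] by metis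
    show "(if ?N x * Dq K l c (u0 x) \<le> M then ?Q x (v x) * ?N x else 0)
        \<le> (1+e) * (?Q x (w x) * ?N x) + ((1+1/e) * M) * sqn K l (\<lambda>k. w x k - v x k)"
    proof (cases "?N x * Dq K l c (u0 x) \<le> M")
      case True
      have "?Q x (v x) * ?N x \<le> ((1+e) * ?Q x (w x) + (1+1/e) * ?Q x (\<lambda>k. v x k - w x k)) * ?N x"
        by (rule mult_right_mono[OF sp Nn])
      also have "\<dots> = (1+e) * (?Q x (w x) * ?N x) + (1+1/e) * (?Q x (\<lambda>k. v x k - w x k) * ?N x)"
        by (simp add: algebra_simps)
      also have "?Q x (\<lambda>k. v x k - w x k) * ?N x \<le> Dq K l c (u0 x) * sqn K l (\<lambda>k. w x k - v x k) * ?N x"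
        by (rule mult_right_mono[OF bd Nn])
      also have "\<dots> = (?N x * Dq K l c (u0 x)) * sqn K l (\<lambda>k. w x k - v x k)" by simp
      also have "\<dots> \<le> M * sqn K l (\<lambda>k. w x k - v x k)"
        by (rule mult_right_mono[OF True sqn_nonneg])
      finally show ?thesis using True e1 by (simp add: mult_left_mono mult.assoc)
    next
      case False
      have "0 \<le> (1+e) * (?Q x (w x) * ?N x) + ((1+1/e) * M) * sqn K l (\<lambda>k. w x k - v x k)"
        using e e1 M Q_nonneg[OF l] Nn sqn_nonneg by (intro add_nonneg_nonneg mult_nonneg_nonneg) auto
      then show ?thesis using False by simp
    qed
  qed
  also have "\<dots> = ennreal (1+e) * (\<integral>\<^sup>+x. ennreal (?Q x (w x) * ?N x) \<partial>?L)
      + ennreal ((1+1/e) * M) * (\<integral>\<^sup>+x. ennreal (sqn K l (\<lambda>k. w x k - v x k)) \<partial>?L)"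
    by (rule nn_lin) (use e e1 M Q_nonneg[OF l] Nn sqn_nonneg in \<open>auto intro: mult_nonneg_nonneg\<close>)
  also have "(\<integral>\<^sup>+x. ennreal (?Q x (w x) * ?N x) \<partial>?L)
      \<le> (\<integral>\<^sup>+x. ennreal (\<Sum>\<alpha>\<in>UNIV. ?Q x (\<lambda>k. pd \<alpha> (\<lambda>z. w z k) x)) \<partial>?L)"
    by (rule star[OF l S C u1 u2 cu cpu cppu harm w1 wsupp])
  also have "\<dots> \<le> (\<integral>\<^sup>+x. ennreal ((1+e) * (\<Sum>\<alpha>\<in>UNIV. ?Q x (G x \<alpha>))
        + (1+1/e) * (\<Sum>\<alpha>\<in>UNIV. ?Q x (\<lambda>k. pd \<alpha> (\<lambda>z. w z k) x - G x \<alpha> k))) \<partial>?L)"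
  proof (rule nn_integral_mono, rule ennreal_leI)
    fix x
    have "(\<Sum>\<alpha>\<in>UNIV. ?Q x (\<lambda>k. pd \<alpha> (\<lambda>z. w z k) x))
        \<le> (\<Sum>\<alpha>\<in>UNIV. (1+e) * ?Q x (G x \<alpha>) + (1+1/e) * ?Q x (\<lambda>k. pd \<alpha> (\<lambda>z. w z k) x - G x \<alpha> k))"
      by (intro sum_mono Q_split[OF l e])
    then show "(\<Sum>\<alpha>\<in>UNIV. ?Q x (\<lambda>k. pd \<alpha> (\<lambda>z. w z k) x))
        \<le> (1+e) * (\<Sum>\<alpha>\<in>UNIV. ?Q x (G x \<alpha>)) + (1+1/e) * (\<Sum>\<alpha>\<in>UNIV. ?Q x (\<lambda>k. pd \<alpha> (\<lambda>z. w z k) x - G x \<alpha> k))"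
      by (simp add: sum.distrib sum_distrib_left)
  qed
  also have "\<dots> = ennreal (1+e) * (\<integral>\<^sup>+x. ennreal (Qgrad K l (\<lambda>x. gam c (u0 x)) G x) \<partial>?L)
        + ennreal (1+1/e) * (\<integral>\<^sup>+x. ennreal (Qgrad K l (\<lambda>x. gam c (u0 x)) (\<lambda>y \<alpha> k. pd \<alpha> (\<lambda>z. w z k) y - G y \<alpha> k) x) \<partial>?L)"
    unfolding Qgrad_def
    by (rule nn_lin) (use e1 Q_nonneg[OF l] in \<open>auto intro: sum_nonneg\<close>)
  finally show ?thesis by (simp add: mult_left_mono add_mono)
qed

lemma eps_choice:
  fixes y \<delta> :: real
  assumes y: "y \<ge> 0" and d: "\<delta> > 0"
  obtains e where "e > 0" "(1+e)^2 * y \<le> y + \<delta>/2"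
proof -
  define e where "e = min 1 (\<delta> / (6 * (y + 1)))"
  have e0: "e > 0" using y d by (simp add: e_def)
  have e1: "e \<le> 1" by (simp add: e_def)
  have e2: "e * (6 * (y + 1)) \<le> \<delta>"
  proof -
    have "e \<le> \<delta> / (6 * (y + 1))" by (simp add: e_def)
    then have "e * (6 * (y + 1)) \<le> \<delta> / (6 * (y + 1)) * (6 * (y + 1))"
      using y by (intro mult_right_mono) auto
    moreover have "\<delta> / (6 * (y + 1)) * (6 * (y + 1)) = \<delta>" using y by simp
    ultimately show ?thesis by linarith
  qed
  have "e * e \<le> e" using e0 e1 by (simp add: mult_left_le_one_le)
  then have "(2*e + e*e) * y \<le> (3*e) * y" using y by (intro mult_right_mono) auto
  also have "\<dots> \<le> 3 * e * (y + 1)" using e0 by simp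
  also have "\<dots> = (e * (6 * (y + 1))) / 2" by simp
  also have "\<dots> \<le> \<delta> / 2" using e2 by simp
  finally have "(2*e + e*e) * y \<le> \<delta>/2" .
  then have "(1+e)^2 * y \<le> y + \<delta>/2" by (simp add: power2_eq_square algebra_simps)
  then show ?thesis using e0 that by blast
qed

lemma main_ineq:
  fixes u0 :: "real^'n::finite \<Rightarrow> real" and v :: "real^'n \<Rightarrow> nat \<Rightarrow> real"
    and G :: "real^'n \<Rightarrow> 'n \<Rightarrow> nat \<Rightarrow> real"
  assumes l: "l \<ge> 2" and S: "open S"
    and u1: "\<And>x i. x \<in> S \<Longrightarrow> (\<lambda>t. u0 (x + t *\<^sub>R axis i 1)) differentiable (at 0)"
    and u2: "\<And>x i j. x \<in> S \<Longrightarrow> (\<lambda>t. pd i u0 (x + t *\<^sub>R axis j 1)) differentiable (at 0)"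
    and cu: "continuous_on S u0" and cpu: "\<And>i. continuous_on S (pd i u0)"
    and cppu: "\<And>i j. continuous_on S (pd j (pd i u0))"
    and harm: "\<And>x. x \<in> S \<Longrightarrow> (\<Sum>\<alpha>\<in>UNIV. pd \<alpha> (pd \<alpha> u0) x) = 0"
    and vm: "\<And>k. (\<lambda>x. v x k) \<in> borel_measurable (lebesgue_on S)"
    and Gm: "\<And>\<alpha> k. (\<lambda>x. G x \<alpha> k) \<in> borel_measurable (lebesgue_on S)"
    and approx: "\<exists>w. (\<forall>j. Cc_inf K l S (w j)) \<and>
        (\<lambda>j. \<integral>\<^sup>+x. ennreal (sqn K l (\<lambda>k. w j x k - v x k)
              + Qgrad K l (\<lambda>x. gam c (u0 x)) (\<lambda>y \<alpha> k. pd \<alpha> (\<lambda>z. w j z k) y - G y \<alpha> k) x) \<partial>lebesgue_on S)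
          \<longlonglongrightarrow> 0"
  shows "(\<integral>\<^sup>+x. ennreal (Qf K l (gam c (u0 x)) (v x) * (\<Sum>\<alpha>\<in>UNIV. (pd \<alpha> u0 x)^2)) \<partial>lebesgue_on S)
    \<le> (\<integral>\<^sup>+x. ennreal (Qgrad K l (\<lambda>x. gam c (u0 x)) G x) \<partial>lebesgue_on S)"
proof -
  let ?N = "\<lambda>x. \<Sum>\<alpha>\<in>UNIV. (pd \<alpha> u0 x)^2"
  let ?Q = "\<lambda>x z. Qf K l (gam c (u0 x)) z"
  let ?L = "lebesgue_on S"
  let ?Y = "\<integral>\<^sup>+x. ennreal (Qgrad K l (\<lambda>x. gam c (u0 x)) G x) \<partial>?L"
  obtain w where wC: "\<And>j. Cc_inf K l S (w j)"
    and wlim: "(\<lambda>j. \<integral>\<^sup>+x. ennreal (sqn K l (\<lambda>k. w j x k - v x k)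
              + Qgrad K l (\<lambda>x. gam c (u0 x)) (\<lambda>y \<alpha> k. pd \<alpha> (\<lambda>z. w j z k) y - G y \<alpha> k) x) \<partial>?L)
          \<longlonglongrightarrow> 0"
    using approx by blast
  have Sl: "S \<in> sets lebesgue" using S by simp
  have mu[measurable]: "u0 \<in> borel_measurable ?L"
    by (rule continuous_imp_measurable_on_sets_lebesgue[OF cu Sl])
  have mpu[measurable]: "pd i u0 \<in> borel_measurable ?L" for i
    by (rule continuous_imp_measurable_on_sets_lebesgue[OF cpu Sl])
  have [measurable]: "(\<lambda>x. v x k) \<in> borel_measurable ?L" for k by (rule vm)
  have mQv[measurable]: "(\<lambda>x. ?Q x (v x)) \<in> borel_measurable ?L"
    by (rule Q_meas[OF l]) measurable
  have mDq[measurable]: "(\<lambda>x. Dq K l c (u0 x)) \<in> borel_measurable ?L"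
    unfolding Dq_def by measurable
  have Nn: "?N x \<ge> 0" for x by (intro sum_nonneg) auto
  define g where "g M x = ennreal (if ?N x * Dq K l c (u0 x) \<le> real M then ?Q x (v x) * ?N x else 0)" for M :: nat and x
  have mg[measurable]: "g M \<in> borel_measurable ?L" for M
    unfolding g_def by measurable
  show ?thesis
  proof (cases "?Y = \<infinity>")
    case True then show ?thesis by simp
  next
    case False
    then obtain y where y: "y \<ge> 0" "?Y = ennreal y"
      by (cases ?Y rule: ennreal_cases) auto
    have XM: "integral\<^sup>N ?L (g M) \<le> ?Y" for M
    proof (rule ennreal_le_epsilon)
      fix \<delta> :: real assume d: "0 < \<delta>"
      obtain e where e: "e > 0" "(1+e)^2 * y \<le> y + \<delta>/2" using eps_choice[OF y(1) d] by blast
      define Ke where "Ke = (1+e) * (1+1/e) + (1+1/e) * real M"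
      have Ke0: "Ke \<ge> 0" using e by (simp add: Ke_def)
      define \<eta> where "\<eta> = \<delta> / (2 * (Ke + 1))"
      have \<eta>0: "\<eta> > 0" using d Ke0 by (simp add: \<eta>_def)
      have Ke\<eta>: "Ke * \<eta> \<le> \<delta> / 2"
      proof -
        have "Ke * \<eta> = \<delta> / 2 * (Ke / (Ke + 1))" using Ke0 by (simp add: \<eta>_def field_simps)
        also have "\<dots> \<le> \<delta> / 2 * 1" using Ke0 d by (intro mult_left_mono) auto
        finally show ?thesis by simp
      qed
      have "\<forall>\<^sub>F j in sequentially. (\<integral>\<^sup>+x. ennreal (sqn K l (\<lambda>k. w j x k - v x k)
              + Qgrad K l (\<lambda>x. gam c (u0 x)) (\<lambda>y \<alpha> k. pd \<alpha> (\<lambda>z. w j z k) y - G y \<alpha> k) x) \<partial>?L) < ennreal \<eta>"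
        using order_tendstoD(2)[OF wlim] \<eta>0 by simp
      then obtain j where J: "(\<integral>\<^sup>+x. ennreal (sqn K l (\<lambda>k. w j x k - v x k)
              + Qgrad K l (\<lambda>x. gam c (u0 x)) (\<lambda>y \<alpha> k. pd \<alpha> (\<lambda>z. w j z k) y - G y \<alpha> k) x) \<partial>?L) < ennreal \<eta>"
        by (auto simp: eventually_sequentially)
      have Qg_nn: "Qgrad K l (\<lambda>x. gam c (u0 x)) H x \<ge> 0" for H x
        unfolding Qgrad_def using Q_nonneg[OF l] by (intro sum_nonneg) auto
      have I1: "(\<integral>\<^sup>+x. ennreal (sqn K l (\<lambda>k. w j x k - v x k)) \<partial>?L) \<le> ennreal \<eta>"
      proof -
        have "(\<integral>\<^sup>+x. ennreal (sqn K l (\<lambda>k. w j x k - v x k)) \<partial>?L)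
          \<le> (\<integral>\<^sup>+x. ennreal (sqn K l (\<lambda>k. w j x k - v x k)
              + Qgrad K l (\<lambda>x. gam c (u0 x)) (\<lambda>y \<alpha> k. pd \<alpha> (\<lambda>z. w j z k) y - G y \<alpha> k) x) \<partial>?L)"
          by (intro nn_integral_mono ennreal_leI) (simp add: Qg_nn)
        then show ?thesis using J by simp
      qed
      have I2: "(\<integral>\<^sup>+x. ennreal (Qgrad K l (\<lambda>x. gam c (u0 x)) (\<lambda>y \<alpha> k. pd \<alpha> (\<lambda>z. w j z k) y - G y \<alpha> k) x) \<partial>?L) \<le> ennreal \<eta>"
      proof -
        have "(\<integral>\<^sup>+x. ennreal (Qgrad K l (\<lambda>x. gam c (u0 x)) (\<lambda>y \<alpha> k. pd \<alpha> (\<lambda>z. w j z k) y - G y \<alpha> k) x) \<partial>?L)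
          \<le> (\<integral>\<^sup>+x. ennreal (sqn K l (\<lambda>k. w j x k - v x k)
              + Qgrad K l (\<lambda>x. gam c (u0 x)) (\<lambda>y \<alpha> k. pd \<alpha> (\<lambda>z. w j z k) y - G y \<alpha> k) x) \<partial>?L)"
          by (intro nn_integral_mono ennreal_leI) (simp add: sqn_nonneg)
        then show ?thesis using J by simp
      qed
      have "integral\<^sup>N ?L (g M)
          \<le> ennreal (1+e) * (ennreal (1+e) * ?Y
             + ennreal (1+1/e) * (\<integral>\<^sup>+x. ennreal (Qgrad K l (\<lambda>x. gam c (u0 x)) (\<lambda>y \<alpha> k. pd \<alpha> (\<lambda>z. w j z k) y - G y \<alpha> k) x) \<partial>?L))
           + ennreal ((1+1/e) * real M) * (\<integral>\<^sup>+x. ennreal (sqn K l (\<lambda>k. w j x k - v x k)) \<partial>?L)"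
        unfolding g_def
        by (rule approx_step[OF l S u1 u2 cu cpu cppu harm vm Gm wC e(1) of_nat_0_le_iff])
      also have "\<dots> \<le> ennreal (1+e) * (ennreal (1+e) * ennreal y + ennreal (1+1/e) * ennreal \<eta>)
           + ennreal ((1+1/e) * real M) * ennreal \<eta>"
        unfolding y(2) by (intro add_mono mult_left_mono I1 I2 order_refl) auto
      also have "\<dots> = ennreal ((1+e) * ((1+e) * y + (1+1/e) * \<eta>) + (1+1/e) * real M * \<eta>)"
        using e y \<eta>0 by (simp add: ennreal_mult[symmetric] ennreal_plus[symmetric] del: ennreal_plus)
      also have "\<dots> \<le> ennreal (y + \<delta>)"
      proof (rule ennreal_leI)
        have "(1+e) * ((1+e) * y + (1+1/e) * \<eta>) + (1+1/e) * real M * \<eta> = (1+e)^2 * y + Ke * \<eta>"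
          by (simp add: Ke_def power2_eq_square algebra_simps)
        then show "(1+e) * ((1+e) * y + (1+1/e) * \<eta>) + (1+1/e) * real M * \<eta> \<le> y + \<delta>"
          using e(2) Ke\<eta> by simp
      qed
      also have "\<dots> = ?Y + ennreal \<delta>" using y d by (simp add: ennreal_plus)
      finally show "integral\<^sup>N ?L (g M) \<le> ?Y + ennreal \<delta>" .
    qed
    have inc: "incseq g"
    proof (rule incseq_SucI, rule le_funI)
      fix M x
      show "g M x \<le> g (Suc M) x"
        unfolding g_def using Q_nonneg[OF l] Nn
        by (auto intro!: ennreal_leI mult_nonneg_nonneg)
    qed
    have sup: "(SUP M. g M x) = ennreal (?Q x (v x) * ?N x)" for x
    proof (rule antisym)
      show "(SUP M. g M x) \<le> ennreal (?Q x (v x) * ?N x)"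
        unfolding g_def using Q_nonneg[OF l] Nn
        by (intro SUP_least) (auto intro!: ennreal_leI mult_nonneg_nonneg)
      obtain M :: nat where "?N x * Dq K l c (u0 x) \<le> real M" using real_arch_simple by blast
      then have "g M x = ennreal (?Q x (v x) * ?N x)" unfolding g_def by simp
      then show "ennreal (?Q x (v x) * ?N x) \<le> (SUP M. g M x)"
        by (metis UNIV_I SUP_upper)
    qed
    have "(\<integral>\<^sup>+x. ennreal (?Q x (v x) * ?N x) \<partial>?L) = (\<integral>\<^sup>+x. (SUP M. g M x) \<partial>?L)"
      unfolding sup ..
    also have "\<dots> = (SUP M. integral\<^sup>N ?L (g M))"
      by (rule nn_integral_monotone_convergence_SUP[OF inc mg])
    also have "\<dots> \<le> ?Y" by (rule SUP_least) (rule XM)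
    finally show ?thesis .
  qed
qed

lemma Ck2_facts:
  assumes "Ck 2 S u"
  shows "\<And>x i. x \<in> S \<Longrightarrow> (\<lambda>t. u (x + t *\<^sub>R axis i 1)) differentiable (at 0)"
    and "\<And>x i j. x \<in> S \<Longrightarrow> (\<lambda>t. pd i u (x + t *\<^sub>R axis j 1)) differentiable (at 0)"
    and "continuous_on S u" and "\<And>i. continuous_on S (pd i u)"
    and "\<And>i j. continuous_on S (pd j (pd i u))"
  using assms by (auto simp: numeral_2_eq_2)

lemma pd_const_fun: "pd i (\<lambda>y. k) x = 0" unfolding pd_def by simp

theorem lemma3p2:
  fixes \<Omega> \<Sigma> :: "(real^'n) set"
    and K :: field and l :: nat and a \<alpha> :: real
    and c :: "nat \<Rightarrow> real" and u0 :: "real^'n \<Rightarrow> real"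
    and v :: "real^'n \<Rightarrow> nat \<Rightarrow> real" and G :: "real^'n \<Rightarrow> 'n \<Rightarrow> nat \<Rightarrow> real"
  assumes n2: "CARD('n) \<ge> 2"
    and dom: "open \<Omega>" "connected \<Omega>" "bounded \<Omega>" "\<Omega> \<noteq> {}"
    and alpha: "0 < \<alpha>" "\<alpha> < 1"
    and bdry: "C2alpha_boundary \<alpha> \<Omega>"
    and Sig: "closed_smooth_submanifold_codim2 \<Sigma> \<Omega>"
    and l2: "l \<ge> 2"
    and apos: "a > 0"
    and curv: "\<And>p X Y. in_coords K l p \<Longrightarrow> in_coords K l X \<Longrightarrow> in_coords K l Y \<Longrightarrow>
                 gmet K l p X X * gmet K l p Y Y - (gmet K l p X Y)^2 \<noteq> 0 \<Longrightarrow>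
                 sec K l p X Y \<le> - (a^2)"
    and c: "in_Rm1 K l c"
    and sing: "sigma_singular K l \<alpha> \<Omega> \<Sigma> c u0"
    and vH: "H10 K l \<Omega> \<Sigma> (\<lambda>x. gam c (u0 x)) v G"
  shows "(\<integral>\<^sup>+x. ennreal (Qf K l (gam c (u0 x)) (v x) * (\<Sum>i\<in>UNIV. (pd i u0 x)^2)) \<partial>lebesgue_on (\<Omega> - \<Sigma>))
         \<le> ennreal (1 / a^2) * (\<integral>\<^sup>+x. ennreal (Qgrad K l (\<lambda>x. gam c (u0 x)) G x) \<partial>lebesgue_on (\<Omega> - \<Sigma>))"
proof -
  let ?S = "\<Omega> - \<Sigma>"
  let ?\<phi> = "\<lambda>x. gam c (u0 x)"
  have S: "open ?S"
    using dom(1) Sig unfolding closed_smooth_submanifold_codim2_def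
    by (intro open_Diff compact_imp_closed) auto
  have m0: "0 < mdim K l" using kk_lt[OF l2, of K] by simp
  have hm: "harmonic_map K l ?S ?\<phi>"
    using sing unfolding sigma_singular_def Let_def by blast
  have u0eq: "(\<lambda>y. ?\<phi> y 0) = u0" by (simp add: gam_def)
  have Cu0: "Cinf ?S (\<lambda>y. ?\<phi> y 0)"
    using hm m0 unfolding harmonic_map_def by blast
  have Cu: "Cinf ?S u0" using Cu0 unfolding u0eq .
  then have Ck2: "Ck 2 ?S u0" unfolding Cinf_def by blast
  note uf = Ck2_facts[OF Ck2]
  have harm: "(\<Sum>\<alpha>\<in>UNIV. pd \<alpha> (pd \<alpha> u0) x) = 0" if x: "x \<in> ?S" for x
  proof -
    have H: "(\<Sum>\<alpha>\<in>UNIV. pd \<alpha> (pd \<alpha> (\<lambda>y. ?\<phi> y 0)) x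
           + (\<Sum>i<mdim K l. \<Sum>j<mdim K l. Chr K l 0 i j (?\<phi> x) * dmap \<alpha> ?\<phi> x i * dmap \<alpha> ?\<phi> x j)) = 0"
      using hm x m0 unfolding harmonic_map_def by blast
    have dm: "dmap \<alpha> ?\<phi> x i = 0" if "i \<noteq> 0" for \<alpha> i
    proof -
      have "(\<lambda>y. ?\<phi> y i) = (\<lambda>y. c i)" using that by (simp add: gam_def)
      then show ?thesis unfolding dmap_def by (simp add: pd_const_fun)
    qed
    have z: "Chr K l 0 i j (?\<phi> x) * dmap \<alpha> ?\<phi> x i * dmap \<alpha> ?\<phi> x j = 0" for \<alpha> i j
    proof (cases "i = 0 \<and> j = 0")
      case True then show ?thesis by (simp add: Chr_a00)
    next
      case False then show ?thesis using dm by auto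
    qed
    show ?thesis using H unfolding z u0eq by simp
  qed
  have vm: "\<And>k. (\<lambda>x. v x k) \<in> borel_measurable (lebesgue_on ?S)"
    and Gm: "\<And>\<alpha> k. (\<lambda>x. G x \<alpha> k) \<in> borel_measurable (lebesgue_on ?S)"
    and approx: "\<exists>w. (\<forall>j. Cc_inf K l ?S (w j)) \<and>
        (\<lambda>j. \<integral>\<^sup>+x. ennreal (sqn K l (\<lambda>k. w j x k - v x k)
              + Qgrad K l ?\<phi> (\<lambda>y \<alpha> k. pd \<alpha> (\<lambda>z. w j z k) y - G y \<alpha> k) x) \<partial>lebesgue_on ?S)
          \<longlonglongrightarrow> 0"
    using vH unfolding H10_def by blast+
  have main: "(\<integral>\<^sup>+x. ennreal (Qf K l (gam c (u0 x)) (v x) * (\<Sum>i\<in>UNIV. (pd i u0 x)^2)) \<partial>lebesgue_on ?S)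
      \<le> (\<integral>\<^sup>+x. ennreal (Qgrad K l ?\<phi> G x) \<partial>lebesgue_on ?S)"
    by (rule main_ineq[OF l2 S uf harm vm Gm approx])
  have a1: "a^2 \<le> 1" by (rule a_le_1[OF l2 curv])
  have "1 \<le> 1 / a^2" using a1 apos by (simp add: field_simps)
  then have "(1::ennreal) \<le> ennreal (1 / a^2)" using ennreal_leI by fastforce
  then have "(\<integral>\<^sup>+x. ennreal (Qgrad K l ?\<phi> G x) \<partial>lebesgue_on ?S)
      \<le> ennreal (1 / a^2) * (\<integral>\<^sup>+x. ennreal (Qgrad K l ?\<phi> G x) \<partial>lebesgue_on ?S)"
    using mult_right_mono[of 1 "ennreal (1 / a^2)" "\<integral>\<^sup>+x. ennreal (Qgrad K l ?\<phi> G x) \<partial>lebesgue_on ?S"] by simp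
  with main show ?thesis by (rule order_trans)
qed

end
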